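(* Let $\lambda\in\mathbb{C}^*$, $\alpha\in\mathbb{C}$, $h\in\mathbb{C}[t]$, and let $V$ be an irreducible $\mathrm{Vir}$-module on which $d_k$ acts locally finitely for all sufficiently large $k\in\mathbb{N}$. Let $W$ be a subspace of $\Omega(\lambda,\alpha,h)\otimes V$ which is stable under the action of $d_m$ for all sufficiently large $m$. Take any $w=\sum_{i=0}^r a_i(t)s^i\otimes v_i\in W$ with $a_i(t)\in\mathbb{C}[t]$ and $v_i\in V$. Then for every $0\le j\le r+2$, $$\sum_{i=j-2}^r\Big(\binom{i}{j}a_is^{i-j+1}-\binom{i}{j-1}G(a_i)s^{i-j+1}-\binom{i}{j-2}\alpha F(a_i)s^{i-j+2}\Big)\otimes v_i\in W,$$ with the convention $\binom{0}{0}=1$ and $\binom{i}{j}=0$ whenever $j>i$ or $j<0$ (terms with $i<0$ are absent). In particular: (1) (case $j=0$) $sw\in W$; (2) (case $j=r+1$) $G(a_r)\otimes v_r+\alpha F(a_{r-1})\otimes v_{r-1}\in W$; (3) (case $j=r+2$) $\alpha F(a_r)\otimes v_r\in W$.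
   Context: $\mathrm{Vir}$ is the Lie algebra with basis $\{d_i,c\mid i\in\mathbb{Z}\}$ and brackets $[d_i,d_j]=(j-i)d_{i+j}+\delta_{i,-j}\frac{i^3-i}{12}c$, $[c,d_i]=0$. For $\lambda\in\mathbb{C}^*$, $\alpha\in\mathbb{C}$, $h\in\mathbb{C}[t]$, define operators on $\mathbb{C}[t]$ by $F(f)=\frac{h(t)-h(\alpha)}{t-\alpha}f(t)-f'(t)$ and $G(f)=h(\alpha)f+tF(f)$. The $\mathrm{Vir}$-module $\Omega(\lambda,\alpha,h)$ is the vector space $\mathbb{C}[t,s]$ with $c$ acting as $0$ and $d_m(f(t)s^i)=\lambda^m(s-m)^i\big(sf+mG(f)-m^2\alpha F(f)\big)$ for $m\in\mathbb{Z}$, $i\in\mathbb{Z}_+$, $f\in\mathbb{C}[t]$. The tensor product $\Omega(\lambda,\alpha,h)\otimes V$ is the $\mathrm{Vir}$-module with $x(a\otimes v)=xa\otimes v+a\otimes xv$ for $x\in\mathrm{Vir}$. *)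

theory Defs
  imports "HOL-Analysis.Analysis" "HOL-Computational_Algebra.Polynomial"
begin

text \<open>Polynomials: \<open>complex poly\<close> is C[t]; \<open>complex poly poly\<close> is C[t,s] = (C[t])[s]
  (outer variable s, coefficients in C[t]).\<close>

definition tvar :: "complex poly" where "tvar = [:0, 1:]"

definition opF :: "complex \<Rightarrow> complex poly \<Rightarrow> complex poly \<Rightarrow> complex poly" where
  "opF \<alpha> h f = ((h - [:poly h \<alpha>:]) div [:-\<alpha>, 1:]) * f - pderiv f"

definition opG :: "complex \<Rightarrow> complex poly \<Rightarrow> complex poly \<Rightarrow> complex poly" where
  "opG \<alpha> h f = smult (poly h \<alpha>) f + tvar * opF \<alpha> h f"

text \<open>Action of d_m on the basis element f(t) s^i of Omega(lambda,alpha,h).\<close>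
definition dOm_mon :: "complex \<Rightarrow> complex \<Rightarrow> complex poly \<Rightarrow> int \<Rightarrow> complex poly \<Rightarrow> nat \<Rightarrow> complex poly poly" where
  "dOm_mon lam \<alpha> h m f i =
     smult [:lam powi m:] ([:[:- of_int m:], 1:] ^ i *
       ([:0, 1:] * [:f:] + [: smult (of_int m) (opG \<alpha> h f) - smult ((of_int m)^2 * \<alpha>) (opF \<alpha> h f) :]))"

definition dOm :: "complex \<Rightarrow> complex \<Rightarrow> complex poly \<Rightarrow> int \<Rightarrow> complex poly poly \<Rightarrow> complex poly poly" where
  "dOm lam \<alpha> h m p = (\<Sum>i\<le>degree p. dOm_mon lam \<alpha> h m (coeff p i) i)"

text \<open>The tensor product C[t,s] \<otimes> V is modelled (canonically) as V[t,s], i.e. \<open>'v poly poly\<close>.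
  Pure tensor p \<otimes> v:\<close>
definition tens :: "(complex \<Rightarrow> 'v \<Rightarrow> 'v::ab_group_add) \<Rightarrow> complex poly poly \<Rightarrow> 'v \<Rightarrow> 'v poly poly" where
  "tens sc p v = map_poly (map_poly (\<lambda>c. sc c v)) p"

definition tscale :: "(complex \<Rightarrow> 'v \<Rightarrow> 'v::ab_group_add) \<Rightarrow> complex \<Rightarrow> 'v poly poly \<Rightarrow> 'v poly poly" where
  "tscale sc c X = map_poly (map_poly (sc c)) X"

text \<open>Action of d_m on Omega \<otimes> V: x(a \<otimes> v) = xa \<otimes> v + a \<otimes> xv, extended linearly
  over the basis t^j s^i \<otimes> X_{ij}.\<close>
definition dT :: "(complex \<Rightarrow> 'v \<Rightarrow> 'v::ab_group_add) \<Rightarrow> (int \<Rightarrow> 'v \<Rightarrow> 'v) \<Rightarrow>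
     complex \<Rightarrow> complex \<Rightarrow> complex poly \<Rightarrow> int \<Rightarrow> 'v poly poly \<Rightarrow> 'v poly poly" where
  "dT sc d lam \<alpha> h m X =
     (\<Sum>i\<le>degree X. \<Sum>j\<le>degree (coeff X i).
        tens sc (dOm lam \<alpha> h m (monom (monom 1 j) i)) (coeff (coeff X i) j)
        + monom (monom (d m (coeff (coeff X i) j)) j) i)"

definition vir_module :: "(complex \<Rightarrow> 'v \<Rightarrow> 'v::ab_group_add) \<Rightarrow> (int \<Rightarrow> 'v \<Rightarrow> 'v) \<Rightarrow> ('v \<Rightarrow> 'v) \<Rightarrow> bool" where
  "vir_module sc d cc \<longleftrightarrow> vector_space sc \<and>
     (\<forall>k. Vector_Spaces.linear sc sc (d k)) \<and> Vector_Spaces.linear sc sc cc \<and>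
     (\<forall>i j v. d i (d j v) - d j (d i v) =
         sc (of_int (j - i)) (d (i + j) v)
         + (if i = - j then sc (of_int (i^3 - i) / 12) (cc v) else 0)) \<and>
     (\<forall>i v. cc (d i v) = d i (cc v))"

definition vir_submodule :: "(complex \<Rightarrow> 'v \<Rightarrow> 'v::ab_group_add) \<Rightarrow> (int \<Rightarrow> 'v \<Rightarrow> 'v) \<Rightarrow> ('v \<Rightarrow> 'v) \<Rightarrow> 'v set \<Rightarrow> bool" where
  "vir_submodule sc d cc U \<longleftrightarrow> module.subspace sc U \<and>
     (\<forall>k. \<forall>u\<in>U. d k u \<in> U) \<and> (\<forall>u\<in>U. cc u \<in> U)"

definition irreducible_vir :: "(complex \<Rightarrow> 'v \<Rightarrow> 'v::ab_group_add) \<Rightarrow> (int \<Rightarrow> 'v \<Rightarrow> 'v) \<Rightarrow> ('v \<Rightarrow> 'v) \<Rightarrow> bool" where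
  "irreducible_vir sc d cc \<longleftrightarrow> vir_module sc d cc \<and> (UNIV :: 'v set) \<noteq> {0} \<and>
     (\<forall>U. vir_submodule sc d cc U \<longrightarrow> U = {0} \<or> U = UNIV)"

definition locally_finite_op :: "(complex \<Rightarrow> 'v \<Rightarrow> 'v::ab_group_add) \<Rightarrow> ('v \<Rightarrow> 'v) \<Rightarrow> bool" where
  "locally_finite_op sc f \<longleftrightarrow> (\<forall>v. \<exists>B. finite B \<and> (\<forall>n. (f ^^ n) v \<in> module.span sc B))"

definition gbin :: "nat \<Rightarrow> int \<Rightarrow> complex" where
  "gbin i k = (if k < 0 then 0 else of_nat (i choose nat k))"

end

theory Submission
  imports Defs "HOL-Computational_Algebra.Fundamental_Theorem_Algebra"
begin


lemma lin_add: "Vector_Spaces.linear s s T \<Longrightarrow> T (x + y) = T x + T y"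
  by (simp add: module_hom_iff_linear[symmetric] module_hom.add)
lemma lin_scale: "Vector_Spaces.linear s s T \<Longrightarrow> T (s c x) = s c (T x)"
  by (simp add: module_hom_iff_linear[symmetric] module_hom.scale)
lemma lin_zero: "Vector_Spaces.linear s s T \<Longrightarrow> T 0 = 0"
  by (simp add: module_hom_iff_linear[symmetric] module_hom.zero)
lemma lin_diff: "Vector_Spaces.linear s s T \<Longrightarrow> T (x - y) = T x - T y"
  by (simp add: module_hom_iff_linear[symmetric] module_hom.diff)
lemma lin_neg: "Vector_Spaces.linear s s T \<Longrightarrow> T (- x) = - T x"
  by (simp add: module_hom_iff_linear[symmetric] module_hom.neg)
lemma lin_sum: "Vector_Spaces.linear s s T \<Longrightarrow> T (sum g A) = (\<Sum>a\<in>A. T (g a))"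
  by (simp add: module_hom_iff_linear[symmetric] module_hom.sum)

definition peval :: "('a::field \<Rightarrow> 'b::ab_group_add \<Rightarrow> 'b) \<Rightarrow> ('b \<Rightarrow> 'b) \<Rightarrow> 'a poly \<Rightarrow> 'b \<Rightarrow> 'b" where
  "peval sc T p u = (\<Sum>i\<le>degree p. sc (coeff p i) ((T^^i) u))"

locale VS = vector_space scale for scale :: "'a::field \<Rightarrow> 'b::ab_group_add \<Rightarrow> 'b" (infixr \<open>*s\<close> 75)
begin

abbreviation pev where "pev \<equiv> peval scale"

lemma lin_funpow: "Vector_Spaces.linear scale scale T \<Longrightarrow> Vector_Spaces.linear scale scale (T^^n)"
proof (induction n)
  case 0 then show ?case using linear_ident by (simp add: id_def)
next
  case (Suc n)
  have "Vector_Spaces.linear scale scale (T o (T^^n))"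
    by (rule Vector_Spaces.linear_compose[OF Suc.IH[OF Suc.prems] Suc.prems])
  then show ?case by (simp add: comp_def)
qed

lemma peval_bound: "degree p \<le> K \<Longrightarrow> pev T p u = (\<Sum>i\<le>K. coeff p i *s (T^^i) u)"
  unfolding peval_def[of scale]
  by (rule sum.mono_neutral_left) (auto simp: coeff_eq_0)

lemma peval_add: "pev T (p + q) u = pev T p u + pev T q u"
proof -
  let ?K = "max (degree p) (degree q)"
  have "degree (p+q) \<le> ?K" by (simp add: degree_add_le)
  then show ?thesis
    by (simp add: peval_bound[of _ ?K] peval_bound[of p ?K] peval_bound[of q ?K] scale_left_distrib sum.distrib)
qed

lemma peval_smult: "pev T (smult c p) u = c *s pev T p u"
  unfolding peval_def[of scale] by (simp add: scale_sum_right)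

lemma peval_0[simp]: "pev T 0 u = 0" by (simp add: peval_def[of scale])

lemma peval_minus: "pev T (- p) u = - pev T p u"
  unfolding peval_def[of scale] by (simp add: sum_negf)

lemma peval_diff: "pev T (p - q) u = pev T p u - pev T q u"
  using peval_add[of T p "-q" u] peval_minus[of T q u] by simp

lemma peval_sum: "finite A \<Longrightarrow> pev T (\<Sum>x\<in>A. f x) u = (\<Sum>x\<in>A. pev T (f x) u)"
  by (induction A rule: finite_induct) (auto simp: peval_add)

lemma peval_monom: "pev T (monom c i) u = c *s (T^^i) u"
proof -
  have "pev T (monom c i) u = (\<Sum>j\<le>i. coeff (monom c i) j *s (T^^j) u)"
    by (rule peval_bound) (simp add: degree_monom_le)
  also have "\<dots> = (\<Sum>j\<le>i. if j = i then c *s (T^^j) u else 0)"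
    by (rule sum.cong) (auto simp: coeff_monom)
  also have "\<dots> = c *s (T^^i) u" by simp
  finally show ?thesis .
qed

context
  fixes T assumes linT: "Vector_Spaces.linear scale scale T"
begin

lemma peval_lin_add: "pev T p (x + y) = pev T p x + pev T p y"
  unfolding peval_def[of scale] by (simp add: lin_add[OF lin_funpow[OF linT]] scale_right_distrib sum.distrib)

lemma peval_lin_scale: "pev T p (c *s x) = c *s pev T p x"
  unfolding peval_def[of scale] by (simp add: lin_scale[OF lin_funpow[OF linT]] scale_sum_right mult.commute)

lemma peval_lin_zero: "pev T p 0 = 0"
  unfolding peval_def[of scale] by (simp add: lin_zero[OF lin_funpow[OF linT]])

lemma peval_lin_diff: "pev T p (x - y) = pev T p x - pev T p y"
  unfolding peval_def[of scale] by (simp add: lin_diff[OF lin_funpow[OF linT]] scale_right_diff_distrib sum_subtractf)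

lemma peval_lin_sum: "finite A \<Longrightarrow> pev T p (\<Sum>a\<in>A. g a) = (\<Sum>a\<in>A. pev T p (g a))"
  by (induction A rule: finite_induct) (auto simp: peval_lin_add peval_lin_zero)

lemma peval_T_comm: "T (pev T p u) = pev T p (T u)"
  unfolding peval_def[of scale]
  by (simp add: lin_sum[OF linT] lin_scale[OF linT] funpow_swap1)

lemma peval_pCons: "pev T (pCons a p) u = a *s u + pev T p (T u)"
proof -
  let ?K = "Suc (degree p)"
  have "pev T (pCons a p) u = (\<Sum>i\<le>?K. coeff (pCons a p) i *s (T^^i) u)"
    by (rule peval_bound) (simp add: degree_pCons_le)
  also have "\<dots> = a *s u + (\<Sum>i\<le>degree p. coeff p i *s (T^^i) (T u))"
    by (simp only: sum.atMost_Suc_shift coeff_pCons_0 coeff_pCons_Suc funpow_Suc_right comp_def funpow_0 id_apply)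
  finally show ?thesis by (simp add: peval_def[of scale])
qed

lemma peval_mult: "pev T (p * q) u = pev T p (pev T q u)"
proof (induction p arbitrary: u rule: pCons_induct)
  case 0 then show ?case by simp
next
  case (pCons a p)
  have "pev T (pCons a p * q) u = pev T (smult a q) u + pev T (pCons 0 (p * q)) u"
    by (simp add: peval_add)
  also have "\<dots> = a *s pev T q u + pev T (p * q) (T u)"
    by (simp add: peval_smult peval_pCons)
  also have "\<dots> = a *s pev T q u + pev T p (pev T q (T u))"
    using pCons.IH by simp
  also have "\<dots> = pev T (pCons a p) (pev T q u)"
    by (simp add: peval_pCons peval_T_comm)
  finally show ?case .
qed

lemma peval_comm: "pev T p (pev T q u) = pev T q (pev T p u)"
  by (metis peval_mult mult.commute)

end

lemma lf_annih:
  assumes fin: "finite B" and sp: "\<forall>n. (T^^n) u \<in> span B"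
  shows "\<exists>p. p \<noteq> 0 \<and> pev T p u = 0"
proof (cases "inj_on (\<lambda>i. (T^^i) u) {..card B}")
  case False
  then obtain i j where ij: "i \<le> card B" "j \<le> card B" "i \<noteq> j" "(T^^i) u = (T^^j) u"
    unfolding inj_on_def by auto
  define p where "p = monom (1::'a) i - monom 1 j"
  have "coeff p i = 1" using ij by (simp add: p_def coeff_monom)
  then have "p \<noteq> 0" by auto
  moreover have "pev T p u = 0" using ij by (simp add: p_def peval_diff peval_monom)
  ultimately show ?thesis by blast
next
  case True
  let ?A = "(\<lambda>i. (T^^i) u) ` {..card B}"
  have cA: "card ?A = Suc (card B)" using True by (simp add: card_image)
  have "dependent ?A"
  proof (rule ccontr)
    assume "\<not> dependent ?A"
    from independent_span_bound[OF fin this] sp have "card ?A \<le> card B" by auto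
    with cA show False by simp
  qed
  then obtain c where c: "\<exists>v\<in>?A. c v \<noteq> 0" "(\<Sum>v\<in>?A. c v *s v) = 0"
    using dependent_finite[of ?A] by auto
  define p where "p = (\<Sum>i\<le>card B. monom (c ((T^^i) u)) i)"
  have "pev T p u = (\<Sum>i\<le>card B. c ((T^^i) u) *s (T^^i) u)"
    by (simp add: p_def peval_sum peval_monom)
  also have "\<dots> = (\<Sum>v\<in>?A. c v *s v)"
    using True by (simp add: sum.reindex)
  finally have "pev T p u = 0" using c by simp
  moreover obtain i0 where i0: "i0 \<le> card B" "c ((T^^i0) u) \<noteq> 0" using c by auto
  have "coeff p i0 = c ((T^^i0) u)"
    using i0 by (simp add: p_def coeff_sum coeff_monom)
  then have "p \<noteq> 0" using i0 by auto
  ultimately show ?thesis by blast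
qed

lemma shift_span:
  assumes linS: "Vector_Spaces.linear scale scale S" and sp: "\<forall>n. (S^^n) u \<in> span B"
  shows "((\<lambda>x. S x - \<mu> *s x)^^n) u \<in> span B"
proof -
  let ?R = "range (\<lambda>j. (S^^j) u)"
  have SR: "x \<in> span ?R \<Longrightarrow> S x \<in> span ?R" for x
  proof -
    assume "x \<in> span ?R"
    then have "S x \<in> S ` span ?R" by blast
    also have "\<dots> = span (S ` ?R)"
      using module_hom.span_image[of scale scale S] linS by (simp add: module_hom_iff_linear)
    also have "\<dots> \<subseteq> span ?R"
    proof (rule span_mono, rule image_subsetI)
      fix y assume "y \<in> ?R"
      then obtain j where "y = (S^^j) u" by auto
      then show "S y \<in> ?R" by (intro range_eqI[where x="Suc j"]) simp
    qed
    finally show ?thesis .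
  qed
  have "((\<lambda>x. S x - \<mu> *s x)^^n) u \<in> span ?R"
  proof (induction n)
    case 0 then show ?case by (auto intro!: span_base range_eqI[where x=0])
  next
    case (Suc n) then show ?case by (auto intro!: span_diff span_scale SR)
  qed
  also have "span ?R \<subseteq> span B"
    using sp by (metis image_subsetI span_minimal subspace_span rangeE)
  finally show ?thesis .
qed

end

lemma eigvec_exists:
  fixes sc :: "complex \<Rightarrow> 'v::ab_group_add \<Rightarrow> 'v"
  assumes vs: "vector_space sc" and linT: "Vector_Spaces.linear sc sc T"
  shows "p \<noteq> 0 \<Longrightarrow> u \<noteq> 0 \<Longrightarrow> peval sc T p u = 0 \<Longrightarrow> \<exists>\<mu> w. w \<noteq> 0 \<and> T w = sc \<mu> w"
proof (induction "degree p" arbitrary: p rule: less_induct)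
  case less
  interpret V: VS sc using vs by (simp add: VS_def)
  show ?case
  proof (cases "degree p = 0")
    case True
    then obtain k where "p = [:k:]" by (metis degree_eq_zeroE)
    with less.prems have "k \<noteq> 0" "sc k u = 0" by (auto simp: peval_def)
    then show ?thesis using less.prems(2) by simp
  next
    case False
    then obtain \<mu> where "poly p \<mu> = 0" using alg_closed_imp_poly_has_root by blast
    then obtain p2 where p2: "p = [:-\<mu>, 1:] * p2" by (metis dvdE poly_eq_0_iff_dvd)
    have p2nz: "p2 \<noteq> 0" using less.prems p2 by auto
    have "degree p = degree [:-\<mu>, 1:] + degree p2"
      by (subst p2, rule degree_mult_eq) (use p2nz in auto)
    then have dg: "degree p2 < degree p" by simp
    let ?w = "peval sc T p2 u"
    have "peval sc T [:-\<mu>, 1:] ?w = 0" using less.prems(3) p2 V.peval_mult[OF linT] by metis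
    moreover have "peval sc T [:-\<mu>, 1:] x = sc (-\<mu>) x + T x" for x
      by (simp add: V.peval_pCons[OF linT] peval_def)
    ultimately have eq: "T ?w = sc \<mu> ?w"
      by (simp add: add_eq_0_iff) 
    show ?thesis
    proof (cases "?w = 0")
      case True
      from less.hyps[OF dg p2nz less.prems(2) True] show ?thesis .
    next
      case False with eq show ?thesis by blast
    qed
  qed
qed


definition Pf :: "int \<Rightarrow> int \<Rightarrow> nat \<Rightarrow> complex" where
  "Pf n k L = (\<Prod>l<L. of_int k + of_nat l * of_int n - of_int n)"

lemma Pf_nz: assumes "n \<ge> 1" "k > n" shows "Pf n k L \<noteq> 0"
proof -
  have "of_int k + of_nat l * of_int n - of_int n \<noteq> (0::complex)" for l
  proof -
    have "int l * n \<ge> 0" using assms by simp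
    then have "k + int l * n - n > 0" using assms by linarith
    then have "of_int (k + int l * n - n) \<noteq> (0::complex)" unfolding of_int_eq_0_iff by linarith
    then show ?thesis by simp
  qed
  then show ?thesis by (simp add: Pf_def)
qed

lemma Pf_split: "Pf n k (m + t) = Pf n k m * (\<Prod>l<t. of_int k + of_nat (m + l) * of_int n - of_int n)"
  by (induction t) (simp_all add: Pf_def)

definition linp :: "int \<Rightarrow> int \<Rightarrow> nat \<Rightarrow> complex poly" where
  "linp n r l = [: of_int r + of_nat l * of_int n - of_int n, of_int n :]"

lemma alg_contra:
  fixes n r :: int and c :: complex and q q' :: "complex poly"
  assumes n1: "n \<ge> 1" and nr: "n < r" and cnz: "c \<noteq> 0" and qnz: "q \<noteq> 0" and q'nz: "q' \<noteq> 0"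
    and H: "\<And>a::nat. (\<Sum>i\<le>degree q. \<Sum>j\<le>degree q'. coeff q i * Pf n (r + int a * n) i * coeff q' j * Pf n (2*n) j
        * of_int (2*n + int j * n - (r + int a * n + int i * n)) * c^(a+2+i+j) / Pf n r (a+2+i+j)) = 0"
  shows False
proof -
  define p where "p = degree q"
  define p' where "p' = degree q'"
  define tp where "tp i j = smult (coeff q i * coeff q' j * Pf n (2*n) j * c^(i+j))
      ([: of_int (2*n + int j * n - r - int i * n), - of_int n :] * (\<Prod>l<i. linp n r l)
        * (\<Prod>l< p+p'-(i+j). linp n r (i+j+2+l)))" for i j
  define N where "N = (\<Sum>i\<le>p. \<Sum>j\<le>p'. tp i j)"
  have nnz: "(of_int n :: complex) \<noteq> 0" using n1 by simp
  have trm: "poly (tp i j) (of_nat a) = Pf n r (a+2+p+p') / c^(a+2) *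
      (coeff q i * Pf n (r + int a * n) i * coeff q' j * Pf n (2*n) j
        * of_int (2*n + int j * n - (r + int a * n + int i * n)) * c^(a+2+i+j) / Pf n r (a+2+i+j))"
    if ij: "i \<le> p" "j \<le> p'" for i j a
  proof -
    have e1: "poly (\<Prod>l<i. linp n r l) (of_nat a) = Pf n (r + int a * n) i"
      by (simp add: poly_prod Pf_def linp_def algebra_simps)
    have e2: "Pf n r (a+2+p+p') = Pf n r (a+2+i+j) * poly (\<Prod>l< p+p'-(i+j). linp n r (i+j+2+l)) (of_nat a)"
    proof -
      have eq: "a+2+p+p' = (a+2+i+j) + (p+p'-(i+j))" using ij by simp
      have sp: "Pf n r ((a+2+i+j) + (p+p'-(i+j))) = Pf n r (a+2+i+j) * (\<Prod>l<p+p'-(i+j). of_int r + of_nat (a+2+i+j + l) * of_int n - of_int n)"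
        by (rule Pf_split)
      then have "Pf n r (a+2+p+p') = Pf n r (a+2+i+j) * (\<Prod>l<p+p'-(i+j). of_int r + of_nat (a+2+i+j + l) * of_int n - of_int n)"
        by (simp only: eq[symmetric])
      also have "(\<Prod>l<p+p'-(i+j). of_int r + of_nat (a+2+i+j + l) * of_int n - of_int n) = poly (\<Prod>l< p+p'-(i+j). linp n r (i+j+2+l)) (of_nat a)"
        by (simp add: poly_prod linp_def algebra_simps)
      finally show ?thesis .
    qed
    have e3: "poly [: of_int (2*n + int j * n - r - int i * n), - of_int n :] (of_nat a)
        = (of_int (2*n + int j * n - (r + int a * n + int i * n)) :: complex)"
      by (simp add: algebra_simps)
    have e4: "c^(a+2+i+j) = c^(a+2) * c^(i+j)" by (simp add: power_add)
    have nz1: "Pf n r (a+2+i+j) \<noteq> 0" using Pf_nz n1 nr by blast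
    show ?thesis
      unfolding tp_def poly_smult poly_mult e1 e2 e3 e4
      using nz1 cnz by (simp add: field_simps)
  qed
  have roots: "poly N (of_nat a) = 0" for a
  proof -
    have "poly N (of_nat a) = (\<Sum>i\<le>p. \<Sum>j\<le>p'. poly (tp i j) (of_nat a))"
      by (simp add: N_def poly_sum)
    also have "\<dots> = (\<Sum>i\<le>p. \<Sum>j\<le>p'. Pf n r (a+2+p+p') / c^(a+2) *
      (coeff q i * Pf n (r + int a * n) i * coeff q' j * Pf n (2*n) j
        * of_int (2*n + int j * n - (r + int a * n + int i * n)) * c^(a+2+i+j) / Pf n r (a+2+i+j)))"
      by (intro sum.cong refl) (simp add: trm)
    also have "\<dots> = Pf n r (a+2+p+p') / c^(a+2) * (\<Sum>i\<le>p. \<Sum>j\<le>p'.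
      (coeff q i * Pf n (r + int a * n) i * coeff q' j * Pf n (2*n) j
        * of_int (2*n + int j * n - (r + int a * n + int i * n)) * c^(a+2+i+j) / Pf n r (a+2+i+j)))"
      by (simp add: sum_distrib_left)
    also have "\<dots> = 0" using H[of a] by (simp add: p_def p'_def)
    finally show ?thesis .
  qed
  have Nz: "N = 0"
  proof (rule ccontr)
    assume "N \<noteq> 0"
    then have "finite {x. poly N x = 0}" by (rule poly_roots_finite)
    moreover have "range (of_nat :: nat \<Rightarrow> complex) \<subseteq> {x. poly N x = 0}" using roots by auto
    moreover have "infinite (range (of_nat :: nat \<Rightarrow> complex))"
      by (rule range_inj_infinite) (simp add: inj_on_def)
    ultimately show False using finite_subset by blast
  qed
  define X0 where "X0 = - (of_int r - of_int n + of_nat (p+p'+1) * of_int n) / (of_int n :: complex)"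
  have nX: "of_int n * X0 = - (of_int r - of_int n + of_nat (p+p'+1) * of_int n)"
    using nnz by (simp add: X0_def)
  have linX: "poly (linp n r l) X0 = (of_nat l - of_nat (p+p'+1)) * of_int n" for l
    using nX by (simp add: linp_def algebra_simps)
  have other: "poly (tp i j) X0 = 0" if "i \<le> p" "j \<le> p'" "\<not> (i = p \<and> j = p')" for i j
  proof -
    have lt: "i + j < p + p'" using that by auto
    define l0 where "l0 = p + p' - (i+j) - 1"
    have l0: "l0 < p+p'-(i+j)" "i+j+2+l0 = p+p'+1" using lt by (auto simp: l0_def)
    have z: "poly (linp n r (i+j+2+l0)) X0 = 0" by (simp only: linX l0(2)) simp
    have "poly (\<Prod>l< p+p'-(i+j). linp n r (i+j+2+l)) X0 = 0"
    proof -
      have "\<exists>l\<in>{..<p+p'-(i+j)}. poly (linp n r (i+j+2+l)) X0 = 0"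
        using l0 z by (intro bexI[of _ l0]) auto
      then show ?thesis by (simp add: poly_prod)
    qed
    then show ?thesis by (simp add: tp_def)
  qed
  have "poly N X0 = (\<Sum>i\<le>p. \<Sum>j\<le>p'. if i = p \<and> j = p' then poly (tp p p') X0 else 0)"
    unfolding N_def poly_sum by (intro sum.cong refl) (auto simp: other)
  also have "\<dots> = (\<Sum>i\<le>p. if i = p then poly (tp p p') X0 else 0)"
  proof (intro sum.cong refl)
    fix i show "(\<Sum>j\<le>p'. if i = p \<and> j = p' then poly (tp p p') X0 else 0) = (if i = p then poly (tp p p') X0 else 0)"
      by (cases "i = p") simp_all
  qed
  also have "\<dots> = poly (tp p p') X0" by simp
  finally have NX: "poly N X0 = poly (tp p p') X0" .
  have "poly (tp p p') X0 \<noteq> 0"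
  proof -
    have a1: "coeff q p \<noteq> 0" "coeff q' p' \<noteq> 0" using qnz q'nz by (simp_all add: p_def p'_def)
    have a2: "Pf n (2*n) p' \<noteq> 0" using Pf_nz n1 by simp
    have a3: "c^(p+p') \<noteq> 0" using cnz by simp
    have e: "poly [: of_int (2*n + int p' * n - r - int p * n), - of_int n :] X0 = (of_int (2*n + 2 * int p' * n) :: complex)"
      using nX by (simp add: algebra_simps)
    have "2*n + 2 * int p' * n > 0" using n1 by (simp add: add_pos_nonneg)
    then have ne: "(of_int (2*n + 2 * int p' * n) :: complex) \<noteq> 0"
      unfolding of_int_eq_0_iff by linarith
    have a4: "poly [: of_int (2*n + int p' * n - r - int p * n), - of_int n :] X0 \<noteq> 0"
      unfolding e by (rule ne)
    have fz: "poly (linp n r l) X0 \<noteq> 0" if "l < p" for l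
    proof -
      have "(of_nat l :: complex) - of_nat (p+p'+1) = of_int (int l - int (p+p'+1))" by simp
      moreover have "(of_int (int l - int (p+p'+1)) :: complex) \<noteq> 0"
        unfolding of_int_eq_0_iff using that by linarith
      ultimately show ?thesis unfolding linX using nnz by simp
    qed
    have a5: "poly (\<Prod>l<p. linp n r l) X0 \<noteq> 0"
      unfolding poly_prod using fz by (simp add: prod_zero_iff)
    show ?thesis using a1 a2 a3 a4 a5 by (simp add: tp_def)
  qed
  with NX Nz show False by simp
qed


lemma linT_lemma:
  assumes vs: "vector_space sc" and linS: "Vector_Spaces.linear sc sc S"
  shows "Vector_Spaces.linear sc sc (\<lambda>x. S x - sc \<mu> x)"
proof -
  interpret V: VS sc using vs by (simp add: VS_def)
  show ?thesis unfolding Vector_Spaces.linear_iff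
  proof (intro conjI allI)
    show "vector_space sc" by (rule vs)
    show "vector_space sc" by (rule vs)
    fix x y show "S (x + y) - sc \<mu> (x + y) = (S x - sc \<mu> x) + (S y - sc \<mu> y)"
      by (simp add: lin_add[OF linS] V.scale_right_distrib algebra_simps)
  next
    fix c x show "S (sc c x) - sc \<mu> (sc c x) = sc c (S x - sc \<mu> x)"
      by (simp add: lin_scale[OF linS] V.scale_right_diff_distrib mult.commute)
  qed
qed

lemma KTp_lemma:
  fixes sc :: "complex \<Rightarrow> 'v::ab_group_add \<Rightarrow> 'v" and d :: "int \<Rightarrow> 'v \<Rightarrow> 'v"
  assumes vs: "vector_space sc" and lin: "\<And>k. Vector_Spaces.linear sc sc (d k)"
    and rel: "\<And>i j v. i + j \<noteq> 0 \<Longrightarrow> d i (d j v) = d j (d i v) + sc (of_int (j - i)) (d (i + j) v)"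
    and n1: "n \<ge> 1" and ev: "d n v = sc \<mu> v" and k0: "k > 0"
  shows "((\<lambda>x. d n x - sc \<mu> x)^^L) (d k v) = sc (Pf n k L) (d (k + int L * n) v)"
proof (induction L)
  case 0
  interpret V: VS sc using vs by (simp add: VS_def)
  show ?case by (simp add: Pf_def)
next
  case (Suc L)
  interpret V: VS sc using vs by (simp add: VS_def)
  let ?T = "\<lambda>x. d n x - sc \<mu> x"
  have linT: "Vector_Spaces.linear sc sc ?T" by (rule linT_lemma[OF vs lin])
  have KT: "?T (d m v) = sc (of_int (m - n)) (d (m + n) v)" if "m > 0" for m
  proof -
    have "d n (d m v) = d m (d n v) + sc (of_int (m - n)) (d (n + m) v)" using rel[of n m v] that n1 by simp
    moreover have "d m (d n v) = sc \<mu> (d m v)" using ev lin_scale[OF lin] by simp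
    ultimately show ?thesis by (simp add: add.commute)
  qed
  have pos: "k + int L * n > 0" using k0 n1 by (simp add: add_pos_nonneg)
  have "(?T^^Suc L) (d k v) = ?T (sc (Pf n k L) (d (k + int L * n) v))" using Suc.IH by simp
  also have "\<dots> = sc (Pf n k L) (?T (d (k + int L * n) v))" by (rule lin_scale[OF linT])
  also have "\<dots> = sc (Pf n k L) (sc (of_int (k + int L * n - n)) (d (k + int L * n + n) v))"
    using KT[OF pos] by simp
  also have "\<dots> = sc (Pf n k (Suc L)) (d (k + int (Suc L) * n) v)"
  proof -
    have e1: "k + int L * n + n = k + int (Suc L) * n" by (simp add: algebra_simps)
    have e2: "Pf n k (Suc L) = Pf n k L * of_int (k + int L*n - n)" by (simp add: Pf_def)
    show ?thesis by (simp add: e1 e2)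
  qed
  finally show ?case .
qed

lemma residue_nilp:
  fixes sc :: "complex \<Rightarrow> 'v::ab_group_add \<Rightarrow> 'v" and d :: "int \<Rightarrow> 'v \<Rightarrow> 'v"
  assumes vs: "vector_space sc" and lin: "\<And>k. Vector_Spaces.linear sc sc (d k)"
    and rel: "\<And>i j v. i + j \<noteq> 0 \<Longrightarrow> d i (d j v) = d j (d i v) + sc (of_int (j - i)) (d (i + j) v)"
    and n1: "n \<ge> 1" and lfn: "locally_finite_op sc (d n)" and ev: "d n v = sc \<mu> v"
    and r: "n < r" "r \<le> 2*n"
  shows "\<exists>e::nat. \<forall>L\<ge>e. d (r + int L * n) v = 0"
proof -
  interpret V: VS sc using vs by (simp add: VS_def)
  define T where "T = (\<lambda>x. d n x - sc \<mu> x)"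
  have linT: "Vector_Spaces.linear sc sc T" unfolding T_def by (rule linT_lemma[OF vs lin])
  have KTp: "(T^^L) (d k v) = sc (Pf n k L) (d (k + int L * n) v)" if "k > 0" for k L
    unfolding T_def by (rule KTp_lemma[OF vs lin rel n1 ev that])
  have annih: "\<exists>q. q \<noteq> 0 \<and> peval sc T q x = 0" for x
  proof -
    obtain Bx where "finite Bx" "\<forall>i. (d n ^^ i) x \<in> V.span Bx"
      using lfn unfolding locally_finite_op_def by blast
    moreover then have "\<forall>i. (T^^i) x \<in> V.span Bx" unfolding T_def
      using V.shift_span[OF lin] by blast
    ultimately show ?thesis using V.lf_annih by blast
  qed
  define w where "w = d r v"
  have "\<exists>m. \<exists>q. q \<noteq> 0 \<and> peval sc T q w = 0 \<and> degree q = m" using annih by blast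
  then obtain m where "\<exists>q. q \<noteq> 0 \<and> peval sc T q w = 0 \<and> degree q = m"
      and mmin: "\<And>m'. m' < m \<Longrightarrow> \<not> (\<exists>q. q \<noteq> 0 \<and> peval sc T q w = 0 \<and> degree q = m')"
    using exists_least_iff[of "\<lambda>m. \<exists>q. q \<noteq> 0 \<and> peval sc T q w = 0 \<and> degree q = m"] by blast
  then obtain q where q: "q \<noteq> 0" "peval sc T q w = 0" and dq: "degree q = m" by blast
  have qmin: "degree q \<le> degree q'" if "q' \<noteq> 0" "peval sc T q' w = 0" for q'
  proof (rule ccontr)
    assume "\<not> degree q \<le> degree q'"
    then have "degree q' < m" using dq by simp
    from mmin[OF this] that show False by blast
  qed
  have Psi: "poly s c = 0" if s: "peval sc T s w = 0" and qc: "poly q c = 0" for s c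
  proof -
    have "s = s div q * q + s mod q" by simp
    then have "peval sc T (s mod q) w = peval sc T s w - peval sc T (s div q * q) w"
      by (metis V.peval_add add_diff_cancel_left')
    also have "\<dots> = 0" using s q(2) by (simp add: V.peval_mult[OF linT] V.peval_comm[OF linT, of "s div q" q] V.peval_lin_zero[OF linT])
    finally have "peval sc T (s mod q) w = 0" .
    then have "s mod q = 0" using qmin degree_mod_less[OF q(1), of s] by (meson not_le)
    then have "q dvd s" by (simp add: dvd_eq_mod_eq_0)
    then show ?thesis using qc by (metis dvdE poly_mult mult_zero_left)
  qed
  have roots0: "c = 0" if qc: "poly q c = 0" for c
  proof (rule ccontr)
    assume cnz: "c \<noteq> 0"
    obtain q' where q': "q' \<noteq> 0" "peval sc T q' (d (2*n) v) = 0" using annih by blast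
    define p where "p = degree q"
    define p' where "p' = degree q'"
    have H: "(\<Sum>i\<le>degree q. \<Sum>j\<le>degree q'. coeff q i * Pf n (r + int a * n) i * coeff q' j * Pf n (2*n) j
        * of_int (2*n + int j * n - (r + int a * n + int i * n)) * c^(a+2+i+j) / Pf n r (a+2+i+j)) = 0" for a
    proof -
      define k where "k = r + int a * n"
      have k0: "k > 0" "r > 0" using r n1 by (auto simp: k_def add_pos_nonneg)
      define \<alpha> where "\<alpha> i = coeff q i * Pf n k i" for i
      define \<beta> where "\<beta> j = coeff q' j * Pf n (2*n) j" for j
      define A where "A i = k + int i * n" for i
      define B where "B j = 2*n + int j * n" for j
      define Y where "Y u = (\<Sum>i\<le>p. sc (\<alpha> i) (d (A i) u))" for u
      define Y' where "Y' u = (\<Sum>j\<le>p'. sc (\<beta> j) (d (B j) u))" for u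
      have Yv: "Y v = 0"
      proof -
        have "Y v = (\<Sum>i\<le>p. sc (coeff q i) ((T^^i) (d k v)))"
          unfolding Y_def \<alpha>_def A_def by (simp add: KTp[OF k0(1)])
        also have "\<dots> = peval sc T q (d k v)" by (simp add: peval_def p_def)
        also have "d k v = sc (1 / Pf n r a) ((T^^a) w)"
          using KTp[OF k0(2), of a] Pf_nz[OF n1 r(1), of a] by (simp add: w_def k_def)
        also have "(T^^a) w = peval sc T (monom 1 a) w" by (simp add: V.peval_monom)
        also have "peval sc T q (sc (1 / Pf n r a) (peval sc T (monom 1 a) w)) = 0"
          by (simp add: V.peval_lin_scale[OF linT] V.peval_comm[OF linT, of q] q(2) V.peval_lin_zero[OF linT])
        finally show ?thesis .
      qed
      have Y'v: "Y' v = 0"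
      proof -
        have "Y' v = (\<Sum>j\<le>p'. sc (coeff q' j) ((T^^j) (d (2*n) v)))"
          unfolding Y'_def \<beta>_def B_def using n1 by (simp add: KTp)
        also have "\<dots> = peval sc T q' (d (2*n) v)" by (simp add: peval_def p'_def)
        finally show ?thesis using q' by simp
      qed
      have Y0: "Y 0 = 0" by (simp add: Y_def lin_zero[OF lin])
      have Y'0: "Y' 0 = 0" by (simp add: Y'_def lin_zero[OF lin])
      have "0 = Y (Y' v) - Y' (Y v)" by (simp add: Yv Y'v Y0 Y'0)
      also have "Y (Y' v) = (\<Sum>i\<le>p. \<Sum>j\<le>p'. sc (\<alpha> i * \<beta> j) (d (A i) (d (B j) v)))"
        unfolding Y_def Y'_def
        by (simp add: lin_sum[OF lin] lin_scale[OF lin] V.scale_sum_right)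
      also have "Y' (Y v) = (\<Sum>i\<le>p. \<Sum>j\<le>p'. sc (\<alpha> i * \<beta> j) (d (B j) (d (A i) v)))"
        unfolding Y_def Y'_def
        by (simp add: lin_sum[OF lin] lin_scale[OF lin] V.scale_sum_right mult.commute sum.swap[of _ "{..p'}"])
      also have "(\<Sum>i\<le>p. \<Sum>j\<le>p'. sc (\<alpha> i * \<beta> j) (d (A i) (d (B j) v))) - (\<Sum>i\<le>p. \<Sum>j\<le>p'. sc (\<alpha> i * \<beta> j) (d (B j) (d (A i) v)))
          = (\<Sum>i\<le>p. \<Sum>j\<le>p'. sc (\<alpha> i * \<beta> j * of_int (B j - A i)) (d (r + int (a+2+i+j) * n) v))"
      proof -
        have "sc (\<alpha> i * \<beta> j) (d (A i) (d (B j) v)) - sc (\<alpha> i * \<beta> j) (d (B j) (d (A i) v))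
           = sc (\<alpha> i * \<beta> j * of_int (B j - A i)) (d (r + int (a+2+i+j) * n) v)" for i j
        proof -
          have nn: "int a * n \<ge> 0" "int i * n \<ge> 0" "int j * n \<ge> 0" using n1 by simp_all
          have "A i + B j \<noteq> 0" using nn k0 n1 unfolding A_def B_def k_def by linarith
          moreover have "A i + B j = r + int (a+2+i+j) * n" by (simp add: A_def B_def k_def algebra_simps)
          ultimately have "A i + B j \<noteq> 0" "A i + B j = r + int (a+2+i+j) * n" by simp_all
          then show ?thesis using rel[of "A i" "B j" v]
            by (simp add: V.scale_right_diff_distrib[symmetric])
        qed
        note pt = this
        show ?thesis by (simp only: sum_subtractf[symmetric] pt)
      qed
      finally have rel0: "(\<Sum>i\<le>p. \<Sum>j\<le>p'. sc (\<alpha> i * \<beta> j * of_int (B j - A i)) (d (r + int (a+2+i+j) * n) v)) = 0"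
        by simp
      define s where "s = (\<Sum>i\<le>p. \<Sum>j\<le>p'. monom (\<alpha> i * \<beta> j * of_int (B j - A i) / Pf n r (a+2+i+j)) (a+2+i+j))"
      have "peval sc T s w = (\<Sum>i\<le>p. \<Sum>j\<le>p'. sc (\<alpha> i * \<beta> j * of_int (B j - A i) / Pf n r (a+2+i+j)) ((T^^(a+2+i+j)) w))"
        by (simp add: s_def V.peval_sum V.peval_monom)
      also have "\<dots> = (\<Sum>i\<le>p. \<Sum>j\<le>p'. sc (\<alpha> i * \<beta> j * of_int (B j - A i)) (d (r + int (a+2+i+j) * n) v))"
      proof (intro sum.cong refl)
        fix i j
        show "sc (\<alpha> i * \<beta> j * of_int (B j - A i) / Pf n r (a+2+i+j)) ((T^^(a+2+i+j)) w)
            = sc (\<alpha> i * \<beta> j * of_int (B j - A i)) (d (r + int (a+2+i+j) * n) v)"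
          using KTp[OF k0(2), of "a+2+i+j"] Pf_nz[OF n1 r(1), of "a+2+i+j"] by (simp add: w_def)
      qed
      finally have "peval sc T s w = 0" using rel0 by simp
      then have "poly s c = 0" using Psi qc by blast
      then show ?thesis
        by (simp add: s_def poly_sum poly_monom p_def p'_def \<alpha>_def \<beta>_def A_def B_def k_def mult_ac)
    qed
    show False by (rule alg_contra[OF n1 r(1) cnz q(1) q'(1) H])
  qed
  obtain e q1 where qd: "q = [:0, 1:]^e * q1" and nd: "\<not> [:0, 1:] dvd q1"
    using order_decomp[OF q(1), of 0] by auto
  have "degree q1 = 0"
  proof (rule ccontr)
    assume "degree q1 \<noteq> 0"
    then obtain c where c: "poly q1 c = 0" using alg_closed_imp_poly_has_root by blast
    then have "poly q c = 0" by (simp add: qd)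
    then have "c = 0" by (rule roots0)
    with c nd show False by (simp add: poly_eq_0_iff_dvd)
  qed
  then obtain k where k: "q1 = [:k:]" by (metis degree_eq_zeroE)
  have knz: "k \<noteq> 0" using q(1) qd k by auto
  have "peval sc T q w = peval sc T ([:0,1:]^e) (peval sc T [:k:] w)"
    unfolding qd k by (rule V.peval_mult[OF linT])
  also have "peval sc T [:k:] w = sc k w" by (simp add: peval_def)
  also have "[:0,1:]^e = monom (1::complex) e" by (simp add: monom_altdef)
  finally have "sc k ((T^^e) w) = 0"
    using q(2) by (simp add: V.peval_monom V.peval_lin_scale[OF linT] lin_scale[OF V.lin_funpow[OF linT]])
  then have Te: "(T^^e) w = 0" using knz by simp
  have "d (r + int L * n) v = 0" if "L \<ge> e" for L
  proof -
    have "(T^^L) w = (T^^(L - e)) ((T^^e) w)" using that by (metis funpow_add le_add_diff_inverse2 comp_apply)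
    also have "\<dots> = 0" using Te lin_zero[OF V.lin_funpow[OF linT]] by simp
    finally have "sc (Pf n r L) (d (r + int L * n) v) = 0" using KTp[of r L] r n1 by (simp add: w_def)
    then show ?thesis using Pf_nz[OF n1 r(1)] by simp
  qed
  then show ?thesis by blast
qed


lemma pp_eqI: "(\<And>i j. coeff (coeff X i) j = coeff (coeff Y i) j) \<Longrightarrow> X = Y"
  by (rule poly_eqI, rule poly_eqI) simp

lemma tens_coeff:
  assumes vs: "vector_space sc"
  shows "coeff (coeff (tens sc p u) i) j = sc (coeff (coeff p i) j) u"
proof -
  interpret V: VS sc using vs by (simp add: VS_def)
  show ?thesis by (simp add: tens_def coeff_map_poly)
qed

lemma tscale_coeff:
  assumes vs: "vector_space sc"
  shows "coeff (coeff (tscale sc c X) i) j = sc c (coeff (coeff X i) j)"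
proof -
  interpret V: VS sc using vs by (simp add: VS_def)
  show ?thesis by (simp add: tscale_def coeff_map_poly)
qed

lemma tscale_module:
  assumes vs: "vector_space sc"
  shows "module (tscale sc)"
proof -
  interpret V: VS sc using vs by (simp add: VS_def)
  show ?thesis
    by unfold_locales (auto intro!: pp_eqI simp: tscale_coeff[OF vs] V.scale_right_distrib V.scale_left_distrib)
qed

context
  fixes sc :: "complex \<Rightarrow> 'v::ab_group_add \<Rightarrow> 'v"
  assumes vs: "vector_space sc"
begin

lemma vsm: "module sc" using vs by (simp add: module_iff_vector_space)

lemma tens_add1: "tens sc (p + q) u = tens sc p u + tens sc q u"
  using vs by (intro pp_eqI) (simp add: tens_coeff vector_space.vector_space_assms(2))

lemma tens_add2: "tens sc p (u + u') = tens sc p u + tens sc p u'"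
  using vs by (intro pp_eqI) (simp add: tens_coeff vector_space.vector_space_assms(1))

lemma tens_zero1[simp]: "tens sc 0 u = 0"
  using vs by (intro pp_eqI) (simp add: tens_coeff module.scale_zero_left[OF vsm])

lemma tens_zero2[simp]: "tens sc p 0 = 0"
  using vs by (intro pp_eqI) (simp add: tens_coeff module.scale_zero_right[OF vsm])

lemma tens_minus1: "tens sc (- p) u = - tens sc p u"
  using vs by (intro pp_eqI) (simp add: tens_coeff module.scale_minus_left[OF vsm])

lemma tens_diff1: "tens sc (p - q) u = tens sc p u - tens sc q u"
  using tens_add1[of p "-q" u] tens_minus1[of q u] by simp

lemma tens_sum1: "finite A \<Longrightarrow> tens sc (\<Sum>x\<in>A. f x) u = (\<Sum>x\<in>A. tens sc (f x) u)"
  by (induction A rule: finite_induct) (simp_all add: tens_add1)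

lemma tens_sum2: "finite A \<Longrightarrow> tens sc p (\<Sum>x\<in>A. f x) = (\<Sum>x\<in>A. tens sc p (f x))"
  by (induction A rule: finite_induct) (simp_all add: tens_add2)

lemma tens_scale2: "tens sc p (sc c u) = tens sc (smult [:c:] p) u"
  using vs by (intro pp_eqI) (simp add: tens_coeff vector_space.vector_space_assms(3) mult.commute)

lemma tens_scale_t: "tscale sc c (tens sc p u) = tens sc (smult [:c:] p) u"
  using vs by (intro pp_eqI) (simp add: tens_coeff tscale_coeff vector_space.vector_space_assms(3))

lemma tscale_sum: "finite A \<Longrightarrow> tscale sc c (\<Sum>x\<in>A. f x) = (\<Sum>x\<in>A. tscale sc c (f x))"
  using module.scale_sum_right[OF tscale_module[OF vs]] by blast

end

lemma vdm:
  fixes s :: "complex \<Rightarrow> 'x::ab_group_add \<Rightarrow> 'x"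
  assumes md: "module s" and sub: "module.subspace s W"
  shows "(\<And>m::nat. m \<ge> M \<Longrightarrow> (\<Sum>j\<le>J. s (of_nat m ^ j) (X j)) \<in> W) \<Longrightarrow> j \<le> J \<Longrightarrow> X j \<in> W"
proof (induction J arbitrary: X j)
  case 0
  interpret Mo: module s by (rule md)
  show ?case using 0(1)[of M] 0(2) by simp
next
  case (Suc J)
  interpret Mo: module s by (rule md)
  define X' where "X' j = (\<Sum>l\<in>{Suc j..Suc J}. s (of_nat (l choose j)) (X l))" for j
  have diff: "(\<Sum>j\<le>J. s (of_nat m ^ j) (X' j)) \<in> W" if "m \<ge> M" for m :: nat
  proof -
    have A: "(\<Sum>j\<le>Suc J. s (of_nat (Suc m) ^ j) (X j)) - (\<Sum>j\<le>Suc J. s (of_nat m ^ j) (X j)) \<in> W"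
      using Suc.prems(1)[of "Suc m"] Suc.prems(1)[of m] that Mo.subspace_diff[OF sub] by simp
    have B: "(of_nat (Suc m) :: complex) ^ l - of_nat m ^ l = (\<Sum>j\<le>J. if j < l then of_nat (l choose j) * of_nat m ^ j else 0)"
      if "l \<le> Suc J" for l
    proof -
      have "(of_nat (Suc m) :: complex) ^ l = (of_nat m + 1) ^ l" by (simp add: add.commute)
      also have "\<dots> = (\<Sum>j\<le>l. of_nat (l choose j) * of_nat m ^ j)"
        by (simp add: binomial_ring)
      also have "\<dots> = (\<Sum>j<l. of_nat (l choose j) * of_nat m ^ j) + of_nat m ^ l"
        by (simp add: lessThan_Suc_atMost[symmetric])
      finally have "(of_nat (Suc m) :: complex) ^ l - of_nat m ^ l = (\<Sum>j<l. of_nat (l choose j) * of_nat m ^ j)"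
        by simp
      also have "\<dots> = (\<Sum>j\<le>J. if j < l then of_nat (l choose j) * of_nat m ^ j else 0)"
        using that by (intro sum.mono_neutral_cong_left) auto
      finally show ?thesis .
    qed
    have "(\<Sum>j\<le>Suc J. s (of_nat (Suc m) ^ j) (X j)) - (\<Sum>j\<le>Suc J. s (of_nat m ^ j) (X j))
        = (\<Sum>l\<le>Suc J. s ((of_nat (Suc m) :: complex) ^ l - of_nat m ^ l) (X l))"
      by (simp add: sum_subtractf Mo.scale_left_diff_distrib)
    also have "\<dots> = (\<Sum>l\<le>Suc J. \<Sum>j\<le>J. s (if j < l then of_nat (l choose j) * of_nat m ^ j else 0) (X l))"
    proof (intro sum.cong refl)
      fix l assume "l \<in> {..Suc J}"
      then have l: "l \<le> Suc J" by simp
      show "s ((of_nat (Suc m) :: complex) ^ l - of_nat m ^ l) (X l) = (\<Sum>j\<le>J. s (if j < l then of_nat (l choose j) * of_nat m ^ j else 0) (X l))"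
        by (simp only: B[OF l] Mo.scale_sum_left)
    qed
    also have "\<dots> = (\<Sum>j\<le>J. \<Sum>l\<le>Suc J. s (if j < l then of_nat (l choose j) * of_nat m ^ j else 0) (X l))"
      by (rule sum.swap)
    also have "\<dots> = (\<Sum>j\<le>J. s (of_nat m ^ j) (X' j))"
    proof (intro sum.cong refl)
      fix j assume j: "j \<in> {..J}"
      have "(\<Sum>l\<le>Suc J. s (if j < l then of_nat (l choose j) * of_nat m ^ j else 0) (X l))
          = (\<Sum>l\<in>{Suc j..Suc J}. s (of_nat (l choose j) * of_nat m ^ j) (X l))"
        using j by (intro sum.mono_neutral_cong_right) auto
      also have "\<dots> = s (of_nat m ^ j) (X' j)"
        unfolding X'_def Mo.scale_sum_right Mo.scale_scale by (intro sum.cong refl) (simp add: mult.commute)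
      finally show "(\<Sum>l\<le>Suc J. s (if j < l then of_nat (l choose j) * of_nat m ^ j else 0) (X l)) = s (of_nat m ^ j) (X' j)" .
    qed
    finally show ?thesis using A by simp
  qed
  have X'W: "X' j \<in> W" if "j \<le> J" for j using Suc.IH[of X' j] diff that by blast
  have "X' J = s (of_nat (Suc J)) (X (Suc J))" by (simp add: X'_def)
  then have top: "X (Suc J) \<in> W"
    using X'W[of J] Mo.subspace_scale[OF sub, of "X' J" "1 / of_nat (Suc J)"]
    by (simp del: of_nat_Suc)
  show ?case
  proof (cases "j = Suc J")
    case True then show ?thesis using top by simp
  next
    case False
    then have jJ: "j \<le> J" using Suc.prems(2) by simp
    have "(\<Sum>j\<le>J. s (of_nat m ^ j) (X j)) \<in> W" if "m \<ge> M" for m :: nat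
    proof -
      have "(\<Sum>j\<le>Suc J. s (of_nat m ^ j) (X j)) - s (of_nat m ^ Suc J) (X (Suc J)) \<in> W"
        using Suc.prems(1)[OF that] Mo.subspace_scale[OF sub top] Mo.subspace_diff[OF sub] by blast
      then show ?thesis by simp
    qed
    then show ?thesis using Suc.IH[of X j] jJ by blast
  qed
qed


definition Ej :: "complex \<Rightarrow> complex poly \<Rightarrow> nat \<Rightarrow> nat \<Rightarrow> complex poly \<Rightarrow> complex poly poly" where
  "Ej \<alpha> h j i f = monom (smult (gbin i (int j)) f) (i + 1 - j)
       - monom (smult (gbin i (int j - 1)) (opG \<alpha> h f)) (i + 1 - j)
       - monom (smult (gbin i (int j - 2) * \<alpha>) (opF \<alpha> h f)) (i + 2 - j)"

lemma gbin_nat[simp]: "gbin i (int k) = of_nat (i choose k)" by (simp add: gbin_def)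
lemma gbin_S1[simp]: "gbin i (int (Suc k) - 1) = of_nat (i choose k)" by (simp add: gbin_def)
lemma gbin_S2[simp]: "gbin i (int (Suc (Suc k)) - 2) = of_nat (i choose k)" by (simp add: gbin_def)
lemma gbin_neg[simp]: "k < 0 \<Longrightarrow> gbin i k = 0" by (simp add: gbin_def)

lemma opF_add: "opF \<alpha> h (f + g) = opF \<alpha> h f + opF \<alpha> h g"
  by (simp add: opF_def pderiv_add algebra_simps)
lemma opF_smult: "opF \<alpha> h (smult x f) = smult x (opF \<alpha> h f)"
  by (simp add: opF_def pderiv_smult smult_diff_right)
lemma opF_0[simp]: "opF \<alpha> h 0 = 0" by (simp add: opF_def)
lemma opG_add: "opG \<alpha> h (f + g) = opG \<alpha> h f + opG \<alpha> h g"
  by (simp add: opG_def opF_add algebra_simps smult_add_right)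
lemma opG_smult: "opG \<alpha> h (smult x f) = smult x (opG \<alpha> h f)"
  by (simp add: opG_def opF_smult smult_add_right mult.commute)
lemma opG_0[simp]: "opG \<alpha> h 0 = 0" by (simp add: opG_def)

lemma dOm_mon_add: "dOm_mon lam \<alpha> h m (f + g) i = dOm_mon lam \<alpha> h m f i + dOm_mon lam \<alpha> h m g i"
proof -
  have "[:0, 1:] * [:f + g:] + [: smult (of_int m) (opG \<alpha> h (f+g)) - smult ((of_int m)^2 * \<alpha>) (opF \<alpha> h (f+g)) :]
     = ([:0, 1:] * [:f:] + [: smult (of_int m) (opG \<alpha> h f) - smult ((of_int m)^2 * \<alpha>) (opF \<alpha> h f) :])
     + ([:0, 1:] * [:g:] + [: smult (of_int m) (opG \<alpha> h g) - smult ((of_int m)^2 * \<alpha>) (opF \<alpha> h g) :])"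
    by (simp add: opF_add opG_add smult_add_right algebra_simps)
  note eq = this
  show ?thesis unfolding dOm_mon_def eq by (simp only: distrib_left smult_add_right)
qed

lemma dOm_mon_smult: "dOm_mon lam \<alpha> h m (smult x f) i = smult [:x:] (dOm_mon lam \<alpha> h m f i)"
proof -
  have "[:0, 1:] * [:smult x f:] + [: smult (of_int m) (opG \<alpha> h (smult x f)) - smult ((of_int m)^2 * \<alpha>) (opF \<alpha> h (smult x f)) :]
     = smult [:x:] ([:0, 1:] * [:f:] + [: smult (of_int m) (opG \<alpha> h f) - smult ((of_int m)^2 * \<alpha>) (opF \<alpha> h f) :])"
    by (simp add: opF_smult opG_smult smult_diff_right mult.commute)
  note eq = this
  show ?thesis unfolding dOm_mon_def eq by (simp only: mult_smult_right smult_smult mult.commute)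
qed

lemma dOm_mon_0[simp]: "dOm_mon lam \<alpha> h m 0 i = 0"
  by (simp add: dOm_mon_def)

lemma dOm_mon_sum: "finite A \<Longrightarrow> dOm_mon lam \<alpha> h m (\<Sum>x\<in>A. f x) i = (\<Sum>x\<in>A. dOm_mon lam \<alpha> h m (f x) i)"
  by (induction A rule: finite_induct) (simp_all add: dOm_mon_add)

lemma dOm_monom: "dOm lam \<alpha> h m (monom g i) = dOm_mon lam \<alpha> h m g i"
proof (cases "g = 0")
  case True then show ?thesis by (simp add: dOm_def)
next
  case False
  have "dOm lam \<alpha> h m (monom g i) = (\<Sum>i'\<le>i. dOm_mon lam \<alpha> h m (if i = i' then g else 0) i')"
    using False by (simp add: dOm_def degree_monom_eq coeff_monom)
  also have "\<dots> = (\<Sum>i'\<le>i. if i' = i then dOm_mon lam \<alpha> h m g i else 0)"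
    by (intro sum.cong refl) auto
  finally show ?thesis by simp
qed

lemma S1:
  fixes c :: complex
  shows "(\<Sum>j\<le>Suc (Suc i). monom (smult (c^j * gbin i (int j)) f) (i + 1 - j))
       = (\<Sum>k\<le>i. monom (smult (of_nat (i choose k) * c^k) f) (Suc (i - k)))"
proof -
  have "(\<Sum>j\<le>Suc (Suc i). monom (smult (c^j * gbin i (int j)) f) (i + 1 - j))
      = (\<Sum>j\<le>i. monom (smult (c^j * gbin i (int j)) f) (i + 1 - j))"
    by (simp add: gbin_def binomial_eq_0)
  also have "\<dots> = (\<Sum>k\<le>i. monom (smult (of_nat (i choose k) * c^k) f) (Suc (i - k)))"
    by (intro sum.cong refl) (auto simp: Suc_diff_le mult.commute)
  finally show ?thesis .
qed

lemma S2:
  fixes c :: complex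
  shows "(\<Sum>j\<le>Suc (Suc i). monom (smult (c^j * gbin i (int j - 1)) G) (i + 1 - j))
       = (\<Sum>k\<le>i. monom (smult (of_nat (i choose k) * c^(Suc k)) G) (i - k))"
proof -
  have "(\<Sum>j\<le>Suc (Suc i). monom (smult (c^j * gbin i (int j - 1)) G) (i + 1 - j))
      = monom (smult (c^0 * gbin i (int 0 - 1)) G) (i + 1 - 0)
        + (\<Sum>k\<le>Suc i. monom (smult (c^(Suc k) * gbin i (int (Suc k) - 1)) G) (i + 1 - Suc k))"
    by (rule sum.atMost_Suc_shift)
  also have "\<dots> = (\<Sum>k\<le>Suc i. monom (smult (c^(Suc k) * of_nat (i choose k)) G) (i - k))"
    by simp
  also have "\<dots> = (\<Sum>k\<le>i. monom (smult (of_nat (i choose k) * c^(Suc k)) G) (i - k))"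
    by (simp add: mult.commute)
  finally show ?thesis .
qed

lemma S3:
  fixes c :: complex
  shows "(\<Sum>j\<le>Suc (Suc i). monom (smult (c^j * (gbin i (int j - 2) * \<alpha>)) F) (i + 2 - j))
       = (\<Sum>k\<le>i. monom (smult (of_nat (i choose k) * c^(Suc (Suc k)) * \<alpha>) F) (i - k))"
proof -
  have "(\<Sum>j\<le>Suc (Suc i). monom (smult (c^j * (gbin i (int j - 2) * \<alpha>)) F) (i + 2 - j))
      = monom (smult (c^0 * (gbin i (int 0 - 2) * \<alpha>)) F) (i + 2 - 0)
        + (\<Sum>k\<le>Suc i. monom (smult (c^(Suc k) * (gbin i (int (Suc k) - 2) * \<alpha>)) F) (i + 2 - Suc k))"
    by (rule sum.atMost_Suc_shift)
  also have "(\<Sum>k\<le>Suc i. monom (smult (c^(Suc k) * (gbin i (int (Suc k) - 2) * \<alpha>)) F) (i + 2 - Suc k))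
      = monom (smult (c^(Suc 0) * (gbin i (int (Suc 0) - 2) * \<alpha>)) F) (i + 2 - Suc 0)
        + (\<Sum>k\<le>i. monom (smult (c^(Suc (Suc k)) * (gbin i (int (Suc (Suc k)) - 2) * \<alpha>)) F) (i + 2 - Suc (Suc k)))"
    by (rule sum.atMost_Suc_shift)
  finally show ?thesis by (simp add: mult.commute mult.left_commute)
qed

lemma binom_lin:
  fixes c :: complex
  shows "[:[:c:], 1:] ^ i = (\<Sum>k\<le>i. monom [:of_nat (i choose k) * c^k:] (i - k))"
proof -
  have "[:[:c:], 1:] = [:[:c:]:] + monom 1 1" by (simp add: monom_Suc)
  then have "[:[:c:], 1:] ^ i = (\<Sum>k\<le>i. of_nat (i choose k) * [:[:c:]:] ^ k * monom 1 1 ^ (i - k))"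
    by (simp add: binomial_ring)
  also have "\<dots> = (\<Sum>k\<le>i. monom [:of_nat (i choose k) * c^k:] (i - k))"
    by (intro sum.cong refl) (simp add: poly_const_pow monom_power of_nat_poly smult_monom)
  finally show ?thesis .
qed

lemma K1:
  "dOm_mon lam \<alpha> h m f i = smult [:lam powi m:] (\<Sum>j\<le>Suc (Suc i). smult [:(- of_int m)^j:] (Ej \<alpha> h j i f))"
proof -
  define c :: complex where "c = - of_int m"
  define G where "G = opG \<alpha> h f"
  define F where "F = opF \<alpha> h f"
  define g where "g = smult (of_int m) G - smult ((of_int m)^2 * \<alpha>) F"
  have mc: "(of_int m :: complex) = - c" by (simp add: c_def)
  have r1: "[:0, 1:] * [:f:] + [:g:] = monom f 1 + monom g 0" by (simp add: monom_Suc monom_0)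
  have r2: "[:[:- of_int m:], 1:] ^ i = (\<Sum>k\<le>i. monom [:of_nat (i choose k) * c^k:] (i - k))"
    using binom_lin[of c i] by (simp add: c_def)
  have "[:[:- of_int m:], 1:] ^ i * ([:0, 1:] * [:f:] + [:g:])
      = (\<Sum>k\<le>i. monom [:of_nat (i choose k) * c^k:] (i - k)) * (monom f 1 + monom g 0)"
    by (simp only: r1 r2)
  also have "\<dots> = (\<Sum>k\<le>i. monom (smult (of_nat (i choose k) * c^k) f) (Suc (i - k)))
      + (\<Sum>k\<le>i. monom (smult (of_nat (i choose k) * c^k) g) (i - k))"
    by (simp add: sum_distrib_right distrib_left mult_monom sum.distrib)
  also have "(\<Sum>k\<le>i. monom (smult (of_nat (i choose k) * c^k) g) (i - k))
      = - (\<Sum>k\<le>i. monom (smult (of_nat (i choose k) * c^(Suc k)) G) (i - k))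
        - (\<Sum>k\<le>i. monom (smult (of_nat (i choose k) * c^(Suc (Suc k)) * \<alpha>) F) (i - k))"
    by (simp add: g_def mc sum_negf[symmetric] sum_subtractf[symmetric] smult_diff_right diff_monom[symmetric]
          minus_monom[symmetric] power2_eq_square algebra_simps)
  finally have inner: "[:[:- of_int m:], 1:] ^ i * ([:0, 1:] * [:f:] + [:g:])
      = (\<Sum>k\<le>i. monom (smult (of_nat (i choose k) * c^k) f) (Suc (i - k)))
        - (\<Sum>k\<le>i. monom (smult (of_nat (i choose k) * c^(Suc k)) G) (i - k))
        - (\<Sum>k\<le>i. monom (smult (of_nat (i choose k) * c^(Suc (Suc k)) * \<alpha>) F) (i - k))"
    by simp
  have "(\<Sum>j\<le>Suc (Suc i). smult [:c^j:] (Ej \<alpha> h j i f))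
      = (\<Sum>j\<le>Suc (Suc i). monom (smult (c^j * gbin i (int j)) f) (i + 1 - j))
        - (\<Sum>j\<le>Suc (Suc i). monom (smult (c^j * gbin i (int j - 1)) G) (i + 1 - j))
        - (\<Sum>j\<le>Suc (Suc i). monom (smult (c^j * (gbin i (int j - 2) * \<alpha>)) F) (i + 2 - j))"
    by (simp add: Ej_def G_def F_def smult_diff_right smult_monom sum_subtractf mult_ac del: gbin_nat)
  also have "\<dots> = (\<Sum>k\<le>i. monom (smult (of_nat (i choose k) * c^k) f) (Suc (i - k)))
        - (\<Sum>k\<le>i. monom (smult (of_nat (i choose k) * c^(Suc k)) G) (i - k))
        - (\<Sum>k\<le>i. monom (smult (of_nat (i choose k) * c^(Suc (Suc k)) * \<alpha>) F) (i - k))"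
    by (simp only: S1 S2 S3)
  finally have outer: "(\<Sum>j\<le>Suc (Suc i). smult [:c^j:] (Ej \<alpha> h j i f)) = [:[:- of_int m:], 1:] ^ i * ([:0, 1:] * [:f:] + [:g:])"
    using inner by simp
  show ?thesis unfolding dOm_mon_def outer[unfolded c_def] g_def G_def F_def ..
qed

lemma Ej_big: assumes "j > Suc (Suc i)" shows "Ej \<alpha> h j i f = 0"
proof -
  have e1: "int j - 1 = int (j - 1)" "int j - 2 = int (j - 2)" using assms by auto
  show ?thesis using assms by (simp add: Ej_def e1 binomial_eq_0 del: of_nat_diff)
qed


lemma vir_basic:
  assumes vm: "vir_module sc d cc"
  shows "vector_space sc" "\<And>k. Vector_Spaces.linear sc sc (d k)" "Vector_Spaces.linear sc sc cc"
    "\<And>i j v. i + j \<noteq> 0 \<Longrightarrow> d i (d j v) = d j (d i v) + sc (of_int (j - i)) (d (i + j) v)"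
    "\<And>i v. cc (d i v) = d i (cc v)"
proof -
  show "vector_space sc" "\<And>k. Vector_Spaces.linear sc sc (d k)" "Vector_Spaces.linear sc sc cc"
    "\<And>i v. cc (d i v) = d i (cc v)" using vm by (auto simp: vir_module_def)
  fix i j v assume "i + j \<noteq> (0::int)"
  then have "i \<noteq> - j" by simp
  have raw: "\<forall>i j v. d i (d j v) - d j (d i v) = sc (of_int (j - i)) (d (i + j) v)
         + (if i = - j then sc (of_int (i^3 - i) / 12) (cc v) else 0)"
    using vm unfolding vir_module_def by blast
  have "d i (d j v) - d j (d i v) = sc (of_int (j - i)) (d (i + j) v)"
    using raw[rule_format, of i j v] \<open>i \<noteq> - j\<close> by simp
  then show "d i (d j v) = d j (d i v) + sc (of_int (j - i)) (d (i + j) v)"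
    by (simp add: diff_eq_eq add.commute)
qed

lemma restricted_all:
  fixes sc :: "complex \<Rightarrow> 'v::ab_group_add \<Rightarrow> 'v" and d :: "int \<Rightarrow> 'v \<Rightarrow> 'v"
  assumes irr: "irreducible_vir sc d cc"
    and lf: "\<exists>N::int. \<forall>k\<ge>N. locally_finite_op sc (d k)"
  shows "\<exists>M. \<forall>k\<ge>M. d k u = 0"
proof -
  have vm: "vir_module sc d cc" using irr by (simp add: irreducible_vir_def)
  note vb = vir_basic[OF vm]
  have vs: "vector_space sc" by (rule vb(1))
  have lin: "\<And>k. Vector_Spaces.linear sc sc (d k)" by (rule vb(2))
  have linc: "Vector_Spaces.linear sc sc cc" by (rule vb(3))
  have rel: "\<And>i j v. i + j \<noteq> 0 \<Longrightarrow> d i (d j v) = d j (d i v) + sc (of_int (j - i)) (d (i + j) v)" by (rule vb(4))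
  have ccd: "\<And>i v. cc (d i v) = d i (cc v)" by (rule vb(5))
  interpret V: VS sc using vs by (simp add: VS_def)
  obtain N :: int where N: "\<forall>k\<ge>N. locally_finite_op sc (d k)" using lf by blast
  define n where "n = max N 1"
  have n1: "n \<ge> 1" by (simp add: n_def)
  have lfn: "locally_finite_op sc (d n)" using N by (simp add: n_def)
  obtain u0 :: 'v where u0: "u0 \<noteq> 0"
    using irr unfolding irreducible_vir_def by auto
  obtain B0 where "finite B0" "\<forall>i. (d n ^^ i) u0 \<in> V.span B0"
    using lfn unfolding locally_finite_op_def by blast
  then obtain p0 where p0: "p0 \<noteq> 0" "peval sc (d n) p0 u0 = 0" using V.lf_annih by blast
  obtain \<mu> v where v: "v \<noteq> 0" "d n v = sc \<mu> v"
    using eigvec_exists[OF vs lin[of n] p0(1) u0 p0(2)] by blast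
  have "\<forall>r. \<exists>e::nat. (n < r \<and> r \<le> 2*n) \<longrightarrow> (\<forall>L\<ge>e. d (r + int L * n) v = 0)"
    using residue_nilp[OF vs lin rel n1 lfn v(2)] by blast
  from choice[OF this] obtain E where E0: "\<forall>r. (n < r \<and> r \<le> 2*n) \<longrightarrow> (\<forall>L\<ge>E r. d (r + int L * n) v = 0)"
    by blast
  have E: "d (r + int L * n) v = 0" if "n < r" "r \<le> 2*n" "L \<ge> E r" for r L
    using E0 that by blast
  define Em where "Em = Max (E ` {n+1..2*n})"
  have Em: "E r \<le> Em" if "n < r" "r \<le> 2*n" for r
    unfolding Em_def using that by (intro Max_ge) auto
  have vS: "d k v = 0" if k: "k \<ge> 2*n + int Em * n + 1" for k
  proof -
    define x where "x = k - n - 1"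
    define Lq where "Lq = x div n"
    define r where "r = n + 1 + x mod n"
    have "n * (x div n) + x mod n = x" by (rule mult_div_mod_eq)
    then have kr: "k = r + Lq * n" by (simp add: r_def Lq_def x_def algebra_simps)
    have n0: "0 < n" using n1 by simp
    have "0 \<le> x mod n" "x mod n < n" using pos_mod_sign[OF n0, of x] pos_mod_bound[OF n0, of x] by auto
    then have r1: "n < r" "r \<le> 2*n" unfolding r_def by linarith+
    have "int Em * n \<le> x" using k n1 unfolding x_def by linarith
    then have "(int Em * n) div n \<le> x div n" using n1 by (intro zdiv_mono1) auto
    then have LE: "int Em \<le> Lq" using n1 by (simp add: Lq_def)
    then have "Lq = int (nat Lq)" by simp
    then have kk: "k = r + int (nat Lq) * n" using kr by simp
    have "nat Lq \<ge> E r" using LE Em[OF r1] by linarith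
    then have "d (r + int (nat Lq) * n) v = 0" by (rule E[OF r1])
    then show ?thesis by (simp only: kk)
  qed
  define S where "S = {u. \<exists>M. \<forall>k\<ge>M. d k u = 0}"
  have "vir_submodule sc d cc S"
    unfolding vir_submodule_def
  proof (intro conjI ballI allI)
    show "V.subspace S"
    proof (rule V.subspaceI)
      show "0 \<in> S" unfolding S_def by (auto simp: lin_zero[OF lin])
    next
      fix x y assume "x \<in> S" "y \<in> S"
      then obtain Mx My where "\<forall>k\<ge>Mx. d k x = 0" "\<forall>k\<ge>My. d k y = 0" unfolding S_def by blast
      then show "x + y \<in> S" unfolding S_def by (intro CollectI exI[of _ "max Mx My"]) (auto simp: lin_add[OF lin])
    next
      fix c x assume "x \<in> S"
      then obtain Mx where "\<forall>k\<ge>Mx. d k x = 0" unfolding S_def by blast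
      then show "sc c x \<in> S" unfolding S_def by (intro CollectI exI[of _ Mx]) (auto simp: lin_scale[OF lin])
    qed
  next
    fix j u assume "u \<in> S"
    then obtain M where M: "\<forall>k\<ge>M. d k u = 0" unfolding S_def by blast
    have "d k (d j u) = 0" if "k \<ge> max M (max (M - j) (\<bar>j\<bar> + 1))" for k
    proof -
      have "k + j \<noteq> 0" "k \<ge> M" "k + j \<ge> M" using that by auto
      then show ?thesis using rel[of k j u] M by (simp add: lin_zero[OF lin])
    qed
    then show "d j u \<in> S" unfolding S_def by blast
  next
    fix u assume "u \<in> S"
    then obtain M where M: "\<forall>k\<ge>M. d k u = 0" unfolding S_def by blast
    have "d k (cc u) = 0" if "k \<ge> M" for k
      using M that ccd[of k u] lin_zero[OF linc] by simp
    then have "\<forall>k\<ge>M. d k (cc u) = 0" by blast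
    then show "cc u \<in> S" unfolding S_def by blast
  qed
  moreover have "v \<in> S" unfolding S_def using vS by blast
  note vinS = this
  moreover have "\<forall>U. vir_submodule sc d cc U \<longrightarrow> U = {0} \<or> U = UNIV"
    using irr by (simp add: irreducible_vir_def)
  ultimately have "S = {0} \<or> S = UNIV" by blast
  moreover have "S \<noteq> {0}" using \<open>v \<in> S\<close> v(1) by blast
  ultimately have "S = UNIV" by blast
  then show ?thesis unfolding S_def by blast
qed


lemma dT_bound:
  fixes sc :: "complex \<Rightarrow> 'v::ab_group_add \<Rightarrow> 'v"
  assumes vs: "vector_space sc" and lin: "\<And>k. Vector_Spaces.linear sc sc (d k)"
    and dX: "degree X \<le> I" and dJ: "\<And>i. degree (coeff X i) \<le> J"
  shows "dT sc d lam \<alpha> h m X = (\<Sum>i\<le>I. \<Sum>j\<le>J. tens sc (dOm lam \<alpha> h m (monom (monom 1 j) i)) (coeff (coeff X i) j)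
            + monom (monom (d m (coeff (coeff X i) j)) j) i)"
proof -
  define F where "F i j = tens sc (dOm lam \<alpha> h m (monom (monom 1 j) i)) (coeff (coeff X i) j)
            + monom (monom (d m (coeff (coeff X i) j)) j) i" for i j
  have F0: "F i j = 0" if "coeff (coeff X i) j = 0" for i j
    using that by (simp add: F_def tens_zero2[OF vs] lin_zero[OF lin])
  have inner: "(\<Sum>j\<le>degree (coeff X i). F i j) = (\<Sum>j\<le>J. F i j)" for i
    by (rule sum.mono_neutral_left) (auto simp: F0 coeff_eq_0 intro: le_trans[OF _ dJ])
  have "dT sc d lam \<alpha> h m X = (\<Sum>i\<le>degree X. \<Sum>j\<le>degree (coeff X i). F i j)"
    by (simp add: dT_def F_def)
  also have "\<dots> = (\<Sum>i\<le>degree X. \<Sum>j\<le>J. F i j)" by (simp add: inner)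
  also have "\<dots> = (\<Sum>i\<le>I. \<Sum>j\<le>J. F i j)"
    by (rule sum.mono_neutral_left) (auto simp: F0 coeff_eq_0 dX intro!: sum.neutral)
  finally show ?thesis by (simp add: F_def)
qed

lemma DTw:
  fixes sc :: "complex \<Rightarrow> 'v::ab_group_add \<Rightarrow> 'v"
  assumes vs: "vector_space sc" and lin: "\<And>k. Vector_Spaces.linear sc sc (d k)"
    and dv: "\<And>i. i \<le> r \<Longrightarrow> d m (v i) = 0"
  shows "dT sc d lam \<alpha> h m (\<Sum>i\<le>r. tens sc (monom (a i) i) (v i)) = (\<Sum>i\<le>r. tens sc (dOm_mon lam \<alpha> h m (a i) i) (v i))"
proof -
  interpret V: VS sc using vs by (simp add: VS_def)
  define w where "w = (\<Sum>i\<le>r. tens sc (monom (a i) i) (v i))"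
  define J where "J = (\<Sum>i\<le>r. degree (a i))"
  have cw: "coeff (coeff w i) j = (if i \<le> r then sc (coeff (a i) j) (v i) else 0)" for i j
  proof -
    have "coeff (coeff w i) j = (\<Sum>i'\<le>r. sc (coeff (coeff (monom (a i') i') i) j) (v i'))"
      by (simp add: w_def coeff_sum tens_coeff[OF vs])
    also have "\<dots> = (\<Sum>i'\<le>r. if i' = i then sc (coeff (a i) j) (v i) else 0)"
      by (intro sum.cong refl) (auto simp: coeff_monom)
    finally show ?thesis by simp
  qed
  have dw: "degree w \<le> r"
  proof (rule degree_le, intro allI impI)
    fix i assume "r < i"
    then show "coeff w i = 0" by (intro poly_eqI) (simp add: cw)
  qed
  have dJ: "degree (coeff w i) \<le> J" for i
  proof (rule degree_le, intro allI impI)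
    fix j assume j: "J < j"
    show "coeff (coeff w i) j = 0"
    proof (cases "i \<le> r")
      case True
      have "degree (a i) \<le> J" unfolding J_def using True by (intro member_le_sum) auto
      then have "coeff (a i) j = 0" using j by (intro coeff_eq_0) simp
      then show ?thesis using True by (simp add: cw)
    qed (simp add: cw)
  qed
  have "dT sc d lam \<alpha> h m w = (\<Sum>i\<le>r. \<Sum>j\<le>J. tens sc (dOm lam \<alpha> h m (monom (monom 1 j) i)) (coeff (coeff w i) j)
            + monom (monom (d m (coeff (coeff w i) j)) j) i)"
    by (rule dT_bound[OF vs lin dw dJ])
  also have "\<dots> = (\<Sum>i\<le>r. \<Sum>j\<le>J. tens sc (dOm_mon lam \<alpha> h m (monom 1 j) i) (sc (coeff (a i) j) (v i)))"
    by (intro sum.cong refl) (simp add: cw dOm_monom lin_scale[OF lin] dv)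
  also have "\<dots> = (\<Sum>i\<le>r. tens sc (dOm_mon lam \<alpha> h m (a i) i) (v i))"
  proof (intro sum.cong refl)
    fix i assume "i \<in> {..r}"
    have da: "degree (a i) \<le> J" unfolding J_def using \<open>i \<in> {..r}\<close> by (intro member_le_sum) auto
    have "(\<Sum>j\<le>J. tens sc (dOm_mon lam \<alpha> h m (monom 1 j) i) (sc (coeff (a i) j) (v i)))
        = (\<Sum>j\<le>J. tens sc (dOm_mon lam \<alpha> h m (monom (coeff (a i) j) j) i) (v i))"
      by (intro sum.cong refl) (simp add: tens_scale2[OF vs] dOm_mon_smult[symmetric] smult_monom)
    also have "\<dots> = tens sc (\<Sum>j\<le>J. dOm_mon lam \<alpha> h m (monom (coeff (a i) j) j) i) (v i)"
      by (simp add: tens_sum1[OF vs])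
    also have "\<dots> = tens sc (dOm_mon lam \<alpha> h m (\<Sum>j\<le>J. monom (coeff (a i) j) j) i) (v i)"
      by (simp add: dOm_mon_sum)
    also have "\<dots> = tens sc (dOm_mon lam \<alpha> h m (a i) i) (v i)"
      by (simp add: poly_as_sum_of_monoms'[OF da])
    finally show "(\<Sum>j\<le>J. tens sc (dOm_mon lam \<alpha> h m (monom 1 j) i) (sc (coeff (a i) j) (v i)))
        = tens sc (dOm_mon lam \<alpha> h m (a i) i) (v i)" .
  qed
  finally show ?thesis by (simp add: w_def)
qed

lemma fin_restr:
  fixes r :: nat
  assumes "\<And>u. \<exists>M. \<forall>k\<ge>M. d k u = (0::'v::zero)"
  shows "\<exists>M::int. \<forall>i\<le>r. \<forall>k\<ge>M. d k (v i) = 0"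
proof (induction r)
  case 0 then show ?case using assms[of "v 0"] by auto
next
  case (Suc r)
  then obtain M1 where M1: "\<forall>i\<le>r. \<forall>k\<ge>M1. d k (v i) = 0" by blast
  obtain M2 where M2: "\<forall>k\<ge>M2. d k (v (Suc r)) = 0" using assms by blast
  show ?case
  proof (intro exI[of _ "max M1 M2"] allI impI)
    fix i k assume "i \<le> Suc r" "max M1 M2 \<le> k"
    then show "d k (v i) = 0" using M1 M2 by (cases "i = Suc r") auto
  qed
qed

lemma mainZ:
  fixes sc :: "complex \<Rightarrow> 'v::ab_group_add \<Rightarrow> 'v" and W :: "'v poly poly set"
  assumes vs: "vector_space sc" and lin: "\<And>k. Vector_Spaces.linear sc sc (d k)"
    and lam: "lam \<noteq> 0"
    and subW: "module.subspace (tscale sc) W"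
    and stab: "\<forall>m\<ge>M. \<forall>x\<in>W. dT sc d lam \<alpha> h m x \<in> W"
    and restr: "\<And>u. \<exists>M. \<forall>k\<ge>M. d k u = 0"
    and wW: "(\<Sum>i\<le>r. tens sc (monom (a i) i) (v i)) \<in> W"
    and jr: "j \<le> r + 2"
  shows "(\<Sum>i\<le>r. tens sc (Ej \<alpha> h j i (a i)) (v i)) \<in> W"
proof -
  interpret V: VS sc using vs by (simp add: VS_def)
  interpret Mo: module "tscale sc" by (rule tscale_module[OF vs])
  have "\<exists>M::int. \<forall>i\<le>r. \<forall>k\<ge>M. d k (v i) = 0" by (rule fin_restr[OF restr])
  then obtain Mv :: int where Mv: "\<forall>i\<le>r. \<forall>k\<ge>Mv. d k (v i) = 0" ..
  define M0 where "M0 = nat (max M Mv)"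
  define w where "w = (\<Sum>i\<le>r. tens sc (monom (a i) i) (v i))"
  define Z where "Z j = (\<Sum>i\<le>r. tens sc (Ej \<alpha> h j i (a i)) (v i))" for j
  have Y: "(\<Sum>j\<le>r+2. tscale sc (of_nat m ^ j) (tscale sc ((-1)^j) (Z j))) \<in> W" if m: "m \<ge> M0" for m :: nat
  proof -
    define L where "L = lam powi (int m)"
    define c :: complex where "c = - of_int (int m)"
    have Lnz: "L \<noteq> 0" using lam by (simp add: L_def)
    have mM: "int m \<ge> M" "int m \<ge> Mv" using m by (auto simp: M0_def)
    have dTW: "dT sc d lam \<alpha> h (int m) w \<in> W" using stab mM(1) wW unfolding w_def by blast
    have "dT sc d lam \<alpha> h (int m) w = (\<Sum>i\<le>r. tens sc (dOm_mon lam \<alpha> h (int m) (a i) i) (v i))"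
      unfolding w_def by (rule DTw[OF vs lin]) (use Mv mM in auto)
    also have "\<dots> = (\<Sum>i\<le>r. tscale sc L (\<Sum>j\<le>r+2. tscale sc (c^j) (tens sc (Ej \<alpha> h j i (a i)) (v i))))"
    proof (intro sum.cong refl)
      fix i assume i: "i \<in> {..r}"
      have ext: "(\<Sum>j\<le>Suc (Suc i). smult [:c^j:] (Ej \<alpha> h j i (a i))) = (\<Sum>j\<le>r+2. smult [:c^j:] (Ej \<alpha> h j i (a i)))"
        using i by (intro sum.mono_neutral_left) (auto simp: Ej_big)
      have "tens sc (dOm_mon lam \<alpha> h (int m) (a i) i) (v i)
          = tens sc (smult [:L:] (\<Sum>j\<le>r+2. smult [:c^j:] (Ej \<alpha> h j i (a i)))) (v i)"
        unfolding K1[of lam \<alpha> h "int m" "a i" i] L_def[symmetric] c_def[symmetric] ext ..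
      also have "\<dots> = tscale sc L (\<Sum>j\<le>r+2. tscale sc (c^j) (tens sc (Ej \<alpha> h j i (a i)) (v i)))"
        by (simp only: tens_scale_t[OF vs, symmetric] tens_sum1[OF vs] finite_atMost)
      finally show "tens sc (dOm_mon lam \<alpha> h (int m) (a i) i) (v i)
          = tscale sc L (\<Sum>j\<le>r+2. tscale sc (c^j) (tens sc (Ej \<alpha> h j i (a i)) (v i)))" .
    qed
    also have "\<dots> = tscale sc L (\<Sum>i\<le>r. \<Sum>j\<le>r+2. tscale sc (c^j) (tens sc (Ej \<alpha> h j i (a i)) (v i)))"
      by (simp only: Mo.scale_sum_right)
    also have "(\<Sum>i\<le>r. \<Sum>j\<le>r+2. tscale sc (c^j) (tens sc (Ej \<alpha> h j i (a i)) (v i)))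
        = (\<Sum>j\<le>r+2. \<Sum>i\<le>r. tscale sc (c^j) (tens sc (Ej \<alpha> h j i (a i)) (v i)))"
      by (rule sum.swap)
    also have "\<dots> = (\<Sum>j\<le>r+2. tscale sc (c^j) (Z j))"
      by (simp only: Z_def Mo.scale_sum_right)
    finally have eq: "dT sc d lam \<alpha> h (int m) w = tscale sc L (\<Sum>j\<le>r+2. tscale sc (c^j) (Z j))" .
    have "tscale sc (1 / L) (dT sc d lam \<alpha> h (int m) w) \<in> W"
      using dTW Mo.subspace_scale[OF subW] by blast
    also have "tscale sc (1 / L) (dT sc d lam \<alpha> h (int m) w) = (\<Sum>j\<le>r+2. tscale sc (c^j) (Z j))"
      using Lnz by (simp add: eq)
    also have "\<dots> = (\<Sum>j\<le>r+2. tscale sc (of_nat m ^ j) (tscale sc ((-1)^j) (Z j)))"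
    proof (intro sum.cong refl)
      fix j
      have "c^j = (of_nat m ^ j) * (-1)^j" unfolding c_def using power_minus[of "of_nat m :: complex" j] by (simp add: mult.commute)
      then show "tscale sc (c^j) (Z j) = tscale sc (of_nat m ^ j) (tscale sc ((-1)^j) (Z j))" by simp
    qed
    finally show ?thesis .
  qed
  have "tscale sc ((-1)^j) (Z j) \<in> W"
    by (rule vdm[OF tscale_module[OF vs] subW, where M=M0 and J="r+2" and X="\<lambda>j. tscale sc ((-1)^j) (Z j)"]) (use Y jr in auto)
  then have "tscale sc ((-1)^j) (tscale sc ((-1)^j) (Z j)) \<in> W"
    using Mo.subspace_scale[OF subW] by blast
  then show ?thesis by (simp add: Z_def[symmetric] power_mult_distrib[symmetric])
qed


lemma gbin_gt: "int i < k \<Longrightarrow> gbin i k = 0"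
  by (simp add: gbin_def binomial_eq_0 nat_less_iff)

lemma gbin_self: "gbin i (int i) = 1" by simp

lemma gbin_pred: "gbin i (int i - 1) = of_nat i"
proof (cases i)
  case 0 then show ?thesis by simp
next
  case (Suc i0)
  have "int (Suc i0) - 1 = int i0" by simp
  then show ?thesis using Suc by (simp add: binomial_symmetric[of i0 "Suc i0", symmetric])
qed

lemma Ej_zero: "Ej \<alpha> h 0 i f = monom f (Suc i)"
  by (simp add: Ej_def gbin_def)

lemma Ej_top: "Ej \<alpha> h (Suc (Suc i)) i f = - [:smult \<alpha> (opF \<alpha> h f):]"
proof -
  have "gbin i (int (Suc (Suc i))) = 0" "gbin i (int (Suc (Suc i)) - 1) = 0"
    by (simp_all add: gbin_gt)
  then show ?thesis by (simp add: Ej_def monom_0)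
qed

lemma Ej_sub: "Ej \<alpha> h (Suc i) i f = - [:opG \<alpha> h f:] - monom (smult (of_nat i * \<alpha>) (opF \<alpha> h f)) 1"
proof -
  have "gbin i (int (Suc i)) = 0" by (simp add: gbin_gt)
  moreover have "int (Suc i) - 1 = int i" "int (Suc i) - 2 = int i - 1" by simp_all
  ultimately show ?thesis by (simp add: Ej_def monom_0 gbin_pred)
qed

lemma sum_last: fixes r :: nat shows "(\<Sum>i\<le>r. f i) = f r + (\<Sum>i<r. (f i :: 'a::comm_monoid_add))"
proof -
  have "{..r} = insert r {..<r}" by auto
  then show ?thesis by simp
qed

lemma tens_const_minus: "vector_space sc \<Longrightarrow> tens sc [:- x:] u = - tens sc [:x:] u"
  using tens_minus1[of sc "[:x:]" u] by simp

theorem proposition3p1: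
  fixes sc :: "complex \<Rightarrow> 'v \<Rightarrow> 'v::ab_group_add"
    and d :: "int \<Rightarrow> 'v \<Rightarrow> 'v" and cc :: "'v \<Rightarrow> 'v"
    and lam \<alpha> :: complex and h :: "complex poly"
    and W :: "'v poly poly set"
    and r :: nat and a :: "nat \<Rightarrow> complex poly" and v :: "nat \<Rightarrow> 'v"
  assumes lam: "lam \<noteq> 0"
    and irr: "irreducible_vir sc d cc"
    and lf: "\<exists>N::int. \<forall>k\<ge>N. locally_finite_op sc (d k)"
    and subW: "module.subspace (tscale sc) W"
    and stabW: "\<exists>M::int. \<forall>m\<ge>M. \<forall>x\<in>W. dT sc d lam \<alpha> h m x \<in> W"
    and wW: "(\<Sum>i\<le>r. tens sc (monom (a i) i) (v i)) \<in> W"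
  shows "(\<forall>j\<le>r + 2.
           (\<Sum>i = j - 2..r. tens sc
              (monom (smult (gbin i (int j)) (a i)) (i + 1 - j)
               - monom (smult (gbin i (int j - 1)) (opG \<alpha> h (a i))) (i + 1 - j)
               - monom (smult (gbin i (int j - 2) * \<alpha>) (opF \<alpha> h (a i))) (i + 2 - j))
              (v i)) \<in> W)
       \<and> (\<Sum>i\<le>r. tens sc (monom (a i) (i + 1)) (v i)) \<in> W
       \<and> tens sc [:opG \<alpha> h (a r):] (v r)
           + (if r \<ge> 1 then tens sc [:smult \<alpha> (opF \<alpha> h (a (r - 1))):] (v (r - 1)) else 0) \<in> W
       \<and> tens sc [:smult \<alpha> (opF \<alpha> h (a r)):] (v r) \<in> W"
proof -
  have vm: "vir_module sc d cc" using irr by (simp add: irreducible_vir_def)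
  note vb = vir_basic[OF vm]
  have vs: "vector_space sc" by (rule vb(1))
  have lin: "\<And>k. Vector_Spaces.linear sc sc (d k)" by (rule vb(2))
  have restr: "\<And>u. \<exists>M. \<forall>k\<ge>M. d k u = 0" using restricted_all[OF irr lf] by blast
  obtain M where stab: "\<forall>m\<ge>M. \<forall>x\<in>W. dT sc d lam \<alpha> h m x \<in> W" using stabW by blast
  interpret Mo: module "tscale sc" by (rule tscale_module[OF vs])
  note mz = mainZ[OF vs lin lam subW stab restr]
  have Z: "(\<Sum>i\<le>r. tens sc (Ej \<alpha> h j i (a i)) (v i)) \<in> W" if "j \<le> r + 2" for j
    using mz[OF wW that] .
  have partA: "(\<Sum>i = j - 2..r. tens sc
              (monom (smult (gbin i (int j)) (a i)) (i + 1 - j)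
               - monom (smult (gbin i (int j - 1)) (opG \<alpha> h (a i))) (i + 1 - j)
               - monom (smult (gbin i (int j - 2) * \<alpha>) (opF \<alpha> h (a i))) (i + 2 - j))
              (v i)) \<in> W" if j: "j \<le> r + 2" for j
  proof -
    have "(\<Sum>i = j - 2..r. tens sc (Ej \<alpha> h j i (a i)) (v i)) = (\<Sum>i\<le>r. tens sc (Ej \<alpha> h j i (a i)) (v i))"
      by (rule sum.mono_neutral_left) (auto simp: Ej_big tens_zero1[OF vs])
    then show ?thesis using Z[OF j] by (simp add: Ej_def)
  qed
  have part1: "(\<Sum>i\<le>r. tens sc (monom (a i) (i + 1)) (v i)) \<in> W"
    using Z[of 0] by (simp add: Ej_zero)
  have Ztop: "(\<Sum>i\<le>r. tens sc (Ej \<alpha> h (r + 2) i (a i)) (v i)) = - tens sc [:smult \<alpha> (opF \<alpha> h (a r)):] (v r)"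
  proof -
    have "(\<Sum>i<r. tens sc (Ej \<alpha> h (r + 2) i (a i)) (v i)) = 0"
      by (rule sum.neutral) (auto simp: Ej_big tens_zero1[OF vs])
    then show ?thesis
      by (simp add: sum_last[of _ r] Ej_top[of \<alpha> h r, simplified] tens_minus1[OF vs] tens_const_minus[OF vs])
  qed
  have part3: "tens sc [:smult \<alpha> (opF \<alpha> h (a r)):] (v r) \<in> W"
  proof -
    have "- tens sc [:smult \<alpha> (opF \<alpha> h (a r)):] (v r) \<in> W" using Z[of "r+2"] Ztop by simp
    then show ?thesis using Mo.subspace_neg[OF subW] by fastforce
  qed
  define X where "X = tens sc (monom (smult \<alpha> (opF \<alpha> h (a r))) 1) (v r)"
  have XW: "X \<in> W"
  proof -
    have "(\<Sum>i\<le>(0::nat). tens sc (monom ((\<lambda>_. smult \<alpha> (opF \<alpha> h (a r))) i) i) ((\<lambda>_. v r) i)) \<in> W"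
      using part3 by (simp add: monom_0)
    from mz[OF this, of 0] show ?thesis by (simp add: X_def Ej_zero)
  qed
  have Zsub: "(\<Sum>i\<le>r. tens sc (Ej \<alpha> h (r + 1) i (a i)) (v i))
      = - tens sc [:opG \<alpha> h (a r):] (v r) - tscale sc (of_nat r) X
        - (if r \<ge> 1 then tens sc [:smult \<alpha> (opF \<alpha> h (a (r - 1))):] (v (r - 1)) else 0)"
  proof -
    have top: "tens sc (Ej \<alpha> h (r + 1) r (a r)) (v r) = - tens sc [:opG \<alpha> h (a r):] (v r) - tscale sc (of_nat r) X"
      by (simp add: Ej_sub X_def tens_diff1[OF vs] tens_minus1[OF vs] tens_const_minus[OF vs] tens_scale_t[OF vs] smult_monom mult.commute)
    have rest: "(\<Sum>i<r. tens sc (Ej \<alpha> h (r + 1) i (a i)) (v i))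
        = - (if r \<ge> 1 then tens sc [:smult \<alpha> (opF \<alpha> h (a (r - 1))):] (v (r - 1)) else 0)"
    proof (cases r)
      case 0 then show ?thesis by simp
    next
      case (Suc r0)
      have z: "(\<Sum>i<r0. tens sc (Ej \<alpha> h (Suc (Suc r0)) i (a i)) (v i)) = 0"
        by (rule sum.neutral) (auto simp: Ej_big tens_zero1[OF vs])
      show ?thesis using z by (simp add: Suc Ej_top tens_minus1[OF vs] tens_const_minus[OF vs])
    qed
    have "(\<Sum>i\<le>r. tens sc (Ej \<alpha> h (r + 1) i (a i)) (v i))
        = tens sc (Ej \<alpha> h (r + 1) r (a r)) (v r) + (\<Sum>i<r. tens sc (Ej \<alpha> h (r + 1) i (a i)) (v i))"
      by (rule sum_last)
    then show ?thesis unfolding top rest by (simp only: diff_conv_add_uminus)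
  qed
  have part2: "tens sc [:opG \<alpha> h (a r):] (v r)
           + (if r \<ge> 1 then tens sc [:smult \<alpha> (opF \<alpha> h (a (r - 1))):] (v (r - 1)) else 0) \<in> W"
  proof -
    have "(\<Sum>i\<le>r. tens sc (Ej \<alpha> h (r + 1) i (a i)) (v i)) \<in> W" using Z[of "r+1"] by simp
    then have A: "- tens sc [:opG \<alpha> h (a r):] (v r) - tscale sc (of_nat r) X
        - (if r \<ge> 1 then tens sc [:smult \<alpha> (opF \<alpha> h (a (r - 1))):] (v (r - 1)) else 0) \<in> W"
      by (simp only: Zsub)
    have B: "tscale sc (of_nat r) X \<in> W" using XW Mo.subspace_scale[OF subW] by blast
    have "- (- tens sc [:opG \<alpha> h (a r):] (v r) - tscale sc (of_nat r) X
        - (if r \<ge> 1 then tens sc [:smult \<alpha> (opF \<alpha> h (a (r - 1))):] (v (r - 1)) else 0)) - tscale sc (of_nat r) X \<in> W"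
      using A B Mo.subspace_neg[OF subW] Mo.subspace_diff[OF subW] by blast
    then show ?thesis by (simp add: algebra_simps)
  qed
  show ?thesis using partA part1 part2 part3 by blast
qed


end
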